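(* Fix integers $\tau_1\ge\tau_2\ge 1$. For each integer $n>\tau_1$ let $\mathcal{E}^{(n)}\subseteq\mathbb{R}^2$ be the set of all pairs $$\Big(\mathsf{E}^{(n)}_r,\mathsf{E}^{(n)}_d\Big)=\left(\frac{\log(n\bar\alpha-\bar M)}{\log n},\ \frac{\log \bar M}{\log n}\right)$$ such that $(\bar\alpha,\bar M)$ is achievable for $(n,k,d)=(n,n-\tau_1,n-\tau_2)$ exact-repair regenerating (with $n\bar\alpha-\bar M>0$ and $\bar M>0$). Let $\mathcal{E}$ be the closure of $\limsup_{n\to\infty}\mathcal{E}^{(n)}$, and let $$\mathcal{E}^*=\{(\mathsf{E}_r,\mathsf{E}_d)\in\mathbb{R}^2:\ \mathsf{E}_d\le \mathsf{E}_r+1,\ \ 2\mathsf{E}_d\le 2+\mathsf{E}_r,\ \ \mathsf{E}_d\le 2\}.$$ Then $\mathcal{E}^*=\mathcal{E}$.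
   Context: Write $I_m=\{1,\dots,m\}$. For integers $n,k,d$ with $1\le k\le d\le n-1$, an $(n,k,d,N,N_d,K)$ exact-repair regenerating code consists of encoding functions $f^E_i:I_N\to I_{N_d}$ ($i\in I_n$; node $i$ stores $f^E_i(m)$ for the message $m\in I_N$); for every $A\subseteq I_n$ with $|A|=k$ a decoding function $f^D_A:I_{N_d}^k\to I_N$ with $f^D_A((f^E_i(m))_{i\in A})=m$ for all $m$; and for every $j\in I_n$, every $A\subseteq I_n\setminus\{j\}$ with $|A|=d$ and every $i\in A$ a repair encoding function $F^E_{i,A,j}:I_{N_d}\to I_K$, together with a repair decoding function $F^D_{j,A}:I_K^d\to I_{N_d}$ such that $F^D_{j,A}((F^E_{i,A,j}(f^E_i(m)))_{i\in A})=f^E_j(m)$ for all $m$. A pair $(\bar\alpha,\bar M)$ of reals is achievable for $(n,k,d)$ if for every $\epsilon>0$ there is an $(n,k,d,N,N_d,K)$ exact-repair regenerating code with $\bar\alpha+\epsilon\ge \log N_d/\log K$ and $\bar M-\epsilon\le \log N/\log K$. The limit superior of a sequence of subsets of $\mathbb{R}^2$ is understood as the set of all points that are limits of sequences $x_j\in\mathcal{E}^{(n_j)}$ with $n_j\to\infty$. *)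

theory Defs
  imports "HOL-Analysis.Analysis"
begin

text \<open>I_m = {1..m}. Tuples indexed by a node set A are represented as functions
  nat => nat that are 0 outside A.\<close>

definition tuple_on :: "nat set \<Rightarrow> nat \<Rightarrow> (nat \<Rightarrow> nat) set" where
  "tuple_on A m = {t. (\<forall>i\<in>A. t i \<in> {1..m}) \<and> (\<forall>i. i \<notin> A \<longrightarrow> t i = 0)}"

definition restr :: "nat set \<Rightarrow> (nat \<Rightarrow> nat) \<Rightarrow> nat \<Rightarrow> nat" where
  "restr A g = (\<lambda>i. if i \<in> A then g i else 0)"

definition ER_code :: "nat \<Rightarrow> nat \<Rightarrow> nat \<Rightarrow> nat \<Rightarrow> nat \<Rightarrow> nat \<Rightarrow> bool" where
  "ER_code n k d N Nd K \<longleftrightarrow>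
     1 \<le> N \<and> 1 \<le> Nd \<and> 1 \<le> K \<and>
     (\<exists>(fE :: nat \<Rightarrow> nat \<Rightarrow> nat) (fD :: nat set \<Rightarrow> (nat \<Rightarrow> nat) \<Rightarrow> nat)
        (FE :: nat \<Rightarrow> nat set \<Rightarrow> nat \<Rightarrow> nat \<Rightarrow> nat) (FD :: nat \<Rightarrow> nat set \<Rightarrow> (nat \<Rightarrow> nat) \<Rightarrow> nat).
       (\<forall>i\<in>{1..n}. \<forall>m\<in>{1..N}. fE i m \<in> {1..Nd}) \<and>
       (\<forall>A. A \<subseteq> {1..n} \<and> card A = k \<longrightarrow>
          (\<forall>t\<in>tuple_on A Nd. fD A t \<in> {1..N}) \<and>
          (\<forall>m\<in>{1..N}. fD A (restr A (\<lambda>i. fE i m)) = m)) \<and>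
       (\<forall>j\<in>{1..n}. \<forall>A. A \<subseteq> {1..n} - {j} \<and> card A = d \<longrightarrow>
          (\<forall>i\<in>A. \<forall>x\<in>{1..Nd}. FE i A j x \<in> {1..K}) \<and>
          (\<forall>t\<in>tuple_on A K. FD j A t \<in> {1..Nd}) \<and>
          (\<forall>m\<in>{1..N}. FD j A (restr A (\<lambda>i. FE i A j (fE i m))) = fE j m)))"

definition achievable :: "nat \<Rightarrow> nat \<Rightarrow> nat \<Rightarrow> real \<Rightarrow> real \<Rightarrow> bool" where
  "achievable n k d \<alpha> M \<longleftrightarrow>
     (\<forall>\<epsilon>>0. \<exists>N Nd K. ER_code n k d N Nd K \<and>
        \<alpha> + \<epsilon> \<ge> ln (real Nd) / ln (real K) \<and> M - \<epsilon> \<le> ln (real N) / ln (real K))"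

definition Eset :: "nat \<Rightarrow> nat \<Rightarrow> nat \<Rightarrow> (real \<times> real) set" where
  "Eset \<tau>1 \<tau>2 n = {(ln (real n * \<alpha> - M) / ln (real n), ln M / ln (real n)) | \<alpha> M.
      achievable n (n - \<tau>1) (n - \<tau>2) \<alpha> M \<and> real n * \<alpha> - M > 0 \<and> M > 0}"

definition limsup_sets :: "nat \<Rightarrow> (nat \<Rightarrow> (real \<times> real) set) \<Rightarrow> (real \<times> real) set" where
  "limsup_sets n0 S = {p. \<exists>(nj :: nat \<Rightarrow> nat) (x :: nat \<Rightarrow> real \<times> real).
      (\<forall>j. nj j > n0 \<and> x j \<in> S (nj j)) \<and> filterlim nj at_top sequentially \<and> x \<longlonglongrightarrow> p}"

definition Estar :: "(real \<times> real) set" where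
  "Estar = {(Er, Ed). Ed \<le> Er + 1 \<and> 2 * Ed \<le> 2 + Er \<and> Ed \<le> 2}"

end

theory Submission
  imports Defs "HOL-Computational_Algebra.Polynomial"
begin


lemma finite_inj_into:
  assumes "finite Y" "card Y \<le> P"
  shows "\<exists>\<psi>::'y\<Rightarrow>nat. inj_on \<psi> Y \<and> \<psi> ` Y \<subseteq> {1..P}"
proof -
  obtain h where h: "bij_betw h {1..card Y} Y" using ex_bij_betw_nat_finite_1[OF assms(1)] by blast
  let ?g = "inv_into {1..card Y} h"
  have "bij_betw ?g Y {1..card Y}" using h by (rule bij_betw_inv_into)
  hence "inj_on ?g Y" "?g ` Y = {1..card Y}" by (auto simp: bij_betw_def)
  moreover have "{1..card Y} \<subseteq> {1..P}" using assms(2) by auto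
  ultimately show ?thesis by blast
qed

lemma restr_eq: "restr A f = restr A g \<longleftrightarrow> (\<forall>i\<in>A. f i = g i)"
  unfolding restr_def fun_eq_iff by (metis (full_types))

lemma abstract_ER:
  fixes X :: "'m set" and c :: "nat \<Rightarrow> 'm \<Rightarrow> 'y" and R :: "nat \<Rightarrow> nat set \<Rightarrow> nat \<Rightarrow> 'y \<Rightarrow> 'z"
  assumes fin: "finite X" and ne: "X \<noteq> {}" and cardX: "card X = N"
    and Nd: "Nd \<ge> 1" and cc: "\<forall>i\<in>{1..n}. card (c i ` X) \<le> Nd"
    and K: "K \<ge> 1"
    and cR: "\<forall>j\<in>{1..n}. \<forall>A. A \<subseteq> {1..n}-{j} \<and> card A = d \<longrightarrow> (\<forall>i\<in>A. card (R i A j ` c i ` X) \<le> K)"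
    and dec: "\<forall>A. A \<subseteq> {1..n} \<and> card A = k \<longrightarrow> (\<forall>m\<in>X. \<forall>m'\<in>X. (\<forall>i\<in>A. c i m = c i m') \<longrightarrow> m = m')"
    and rep: "\<forall>j\<in>{1..n}. \<forall>A. A \<subseteq> {1..n}-{j} \<and> card A = d \<longrightarrow>
        (\<forall>m\<in>X. \<forall>m'\<in>X. (\<forall>i\<in>A. R i A j (c i m) = R i A j (c i m')) \<longrightarrow> c j m = c j m')"
  shows "ER_code n k d N Nd K"
proof -
  obtain \<phi> where \<phi>: "bij_betw \<phi> {1..N} X" using ex_bij_betw_nat_finite_1[OF fin] cardX by blast
  have N1: "N \<ge> 1" using ne fin cardX by (metis One_nat_def Suc_leI card_gt_0_iff)
  have "\<forall>i. \<exists>\<psi>::'y\<Rightarrow>nat. i \<in> {1..n} \<longrightarrow> inj_on \<psi> (c i ` X) \<and> \<psi> ` (c i ` X) \<subseteq> {1..Nd}"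
  proof
    fix i show "\<exists>\<psi>::'y\<Rightarrow>nat. i \<in> {1..n} \<longrightarrow> inj_on \<psi> (c i ` X) \<and> \<psi> ` (c i ` X) \<subseteq> {1..Nd}"
    proof (cases "i \<in> {1..n}")
      case True
      then show ?thesis using finite_inj_into[of "c i ` X" Nd] cc fin by auto
    qed auto
  qed
  then obtain \<psi> where \<psi>0: "\<forall>i. i \<in> {1..n} \<longrightarrow> inj_on (\<psi> i) (c i ` X) \<and> \<psi> i ` (c i ` X) \<subseteq> {1..Nd}"
    by (rule choice[THEN exE]) 
  hence \<psi>: "\<And>i. i \<in> {1..n} \<Longrightarrow> inj_on (\<psi> i) (c i ` X) \<and> \<psi> i ` (c i ` X) \<subseteq> {1..Nd}" by blast
  define ch where "ch i A j = (SOME ch::'z\<Rightarrow>nat. inj_on ch (R i A j ` c i ` X) \<and> ch ` (R i A j ` c i ` X) \<subseteq> {1..K})" for i A j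
  have ch: "\<And>i A j. j\<in>{1..n} \<Longrightarrow> A \<subseteq> {1..n}-{j} \<Longrightarrow> card A = d \<Longrightarrow> i \<in> A \<Longrightarrow>
        inj_on (ch i A j) (R i A j ` c i ` X) \<and> ch i A j ` (R i A j ` c i ` X) \<subseteq> {1..K}"
  proof -
    fix i A j assume "j\<in>{1..n}" "A \<subseteq> {1..n}-{j}" "card A = d" "i \<in> A"
    hence "\<exists>ch::'z\<Rightarrow>nat. inj_on ch (R i A j ` c i ` X) \<and> ch ` (R i A j ` c i ` X) \<subseteq> {1..K}"
      using finite_inj_into[of "R i A j ` c i ` X" K] cR fin by auto
    thus "inj_on (ch i A j) (R i A j ` c i ` X) \<and> ch i A j ` (R i A j ` c i ` X) \<subseteq> {1..K}"
      unfolding ch_def by (rule someI_ex)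
  qed
  define fE where "fE i m = \<psi> i (c i (\<phi> m))" for i m
  define fD where "fD A t = (if \<exists>m\<in>{1..N}. restr A (\<lambda>i. fE i m) = t
      then (SOME m. m\<in>{1..N} \<and> restr A (\<lambda>i. fE i m) = t) else 1)" for A t
  define FE where "FE i A j x = (if x \<in> \<psi> i ` (c i ` X)
      then ch i A j (R i A j (inv_into (c i ` X) (\<psi> i) x)) else 1)" for i A j x
  define FD where "FD j A t = (if \<exists>m\<in>{1..N}. restr A (\<lambda>i. FE i A j (fE i m)) = t
      then fE j (SOME m. m\<in>{1..N} \<and> restr A (\<lambda>i. FE i A j (fE i m)) = t) else 1)" for j A t
  have \<phi>X: "\<And>m. m \<in> {1..N} \<Longrightarrow> \<phi> m \<in> X" using \<phi> by (auto simp: bij_betw_def)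
  have \<phi>inj: "\<And>m m'. m \<in> {1..N} \<Longrightarrow> m' \<in> {1..N} \<Longrightarrow> \<phi> m = \<phi> m' \<Longrightarrow> m = m'"
    using \<phi> by (meson bij_betw_def inj_onD)
  have fE_range: "\<And>i m. i \<in> {1..n} \<Longrightarrow> m \<in> {1..N} \<Longrightarrow> fE i m \<in> {1..Nd}"
  proof -
    fix i m assume "i \<in> {1..n}" "m \<in> {1..N}"
    hence "c i (\<phi> m) \<in> c i ` X" "\<psi> i ` (c i ` X) \<subseteq> {1..Nd}" using \<phi>X \<psi> by auto
    thus "fE i m \<in> {1..Nd}" unfolding fE_def by blast
  qed
  have fE_inj: "\<And>i m m'. i \<in> {1..n} \<Longrightarrow> m \<in> {1..N} \<Longrightarrow> m' \<in> {1..N} \<Longrightarrow> fE i m = fE i m' \<Longrightarrow> c i (\<phi> m) = c i (\<phi> m')"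
    unfolding fE_def using \<psi> \<phi>X by (meson image_eqI inj_onD)
  have part1: "\<forall>i\<in>{1..n}. \<forall>m\<in>{1..N}. fE i m \<in> {1..Nd}" using fE_range by blast
  have part2: "\<forall>A. A \<subseteq> {1..n} \<and> card A = k \<longrightarrow>
          (\<forall>t\<in>tuple_on A Nd. fD A t \<in> {1..N}) \<and>
          (\<forall>m\<in>{1..N}. fD A (restr A (\<lambda>i. fE i m)) = m)"
  proof (intro allI impI conjI ballI)
    fix A t assume A: "A \<subseteq> {1..n} \<and> card A = k"
    show "fD A t \<in> {1..N}"
    proof (cases "\<exists>m\<in>{1..N}. restr A (\<lambda>i. fE i m) = t")
      case True
      then show ?thesis unfolding fD_def using someI_ex[OF True[unfolded Bex_def]] by auto
    next
      case False then show ?thesis unfolding fD_def using N1 by auto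
    qed
  next
    fix A m assume A: "A \<subseteq> {1..n} \<and> card A = k" and m: "m \<in> {1..N}"
    have ex: "\<exists>m'. m'\<in>{1..N} \<and> restr A (\<lambda>i. fE i m') = restr A (\<lambda>i. fE i m)" using m by blast
    define m' where "m' = (SOME m'. m'\<in>{1..N} \<and> restr A (\<lambda>i. fE i m') = restr A (\<lambda>i. fE i m))"
    have m': "m'\<in>{1..N}" "restr A (\<lambda>i. fE i m') = restr A (\<lambda>i. fE i m)"
      using someI_ex[OF ex] unfolding m'_def by auto
    have eqs: "\<forall>i\<in>A. fE i m' = fE i m" using m'(2) by (simp add: restr_eq)
    have "\<forall>i\<in>A. c i (\<phi> m') = c i (\<phi> m)"
    proof
      fix i assume i: "i \<in> A"
      hence "i \<in> {1..n}" using A by auto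
      thus "c i (\<phi> m') = c i (\<phi> m)" using fE_inj m m'(1) eqs i by blast
    qed
    hence "\<phi> m' = \<phi> m" using dec A \<phi>X[OF m] \<phi>X[OF m'(1)] by blast
    hence "m' = m" using \<phi>inj m m' by blast
    thus "fD A (restr A (\<lambda>i. fE i m)) = m" unfolding fD_def m'_def[symmetric] using m by auto
  qed
  have part3: "\<forall>j\<in>{1..n}. \<forall>A. A \<subseteq> {1..n} - {j} \<and> card A = d \<longrightarrow>
          (\<forall>i\<in>A. \<forall>x\<in>{1..Nd}. FE i A j x \<in> {1..K}) \<and>
          (\<forall>t\<in>tuple_on A K. FD j A t \<in> {1..Nd}) \<and>
          (\<forall>m\<in>{1..N}. FD j A (restr A (\<lambda>i. FE i A j (fE i m))) = fE j m)"
  proof (intro ballI allI impI conjI)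
    fix j A i x assume j: "j \<in> {1..n}" and A: "A \<subseteq> {1..n} - {j} \<and> card A = d" and i: "i \<in> A"
    show "FE i A j x \<in> {1..K}"
    proof (cases "x \<in> \<psi> i ` (c i ` X)")
      case True
      have "inv_into (c i ` X) (\<psi> i) x \<in> c i ` X" using True by (simp add: inv_into_into)
      hence "R i A j (inv_into (c i ` X) (\<psi> i) x) \<in> R i A j ` c i ` X" by blast
      moreover have "ch i A j ` (R i A j ` c i ` X) \<subseteq> {1..K}" using ch[OF j _ _ i] A by auto
      ultimately have "ch i A j (R i A j (inv_into (c i ` X) (\<psi> i) x)) \<in> {1..K}" by blast
      then show ?thesis unfolding FE_def using True by simp
    next
      case False then show ?thesis unfolding FE_def using K by auto
    qed
  next
    fix j A t assume j: "j \<in> {1..n}" and A: "A \<subseteq> {1..n} - {j} \<and> card A = d"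
    show "FD j A t \<in> {1..Nd}"
    proof (cases "\<exists>m\<in>{1..N}. restr A (\<lambda>i. FE i A j (fE i m)) = t")
      case True
      then show ?thesis unfolding FD_def using someI_ex[OF True[unfolded Bex_def]] fE_range j by auto
    next
      case False then show ?thesis unfolding FD_def using Nd by auto
    qed
  next
    fix j A m assume j: "j \<in> {1..n}" and A: "A \<subseteq> {1..n} - {j} \<and> card A = d" and m: "m \<in> {1..N}"
    have FEe: "\<And>i m. i \<in> A \<Longrightarrow> m \<in> {1..N} \<Longrightarrow> FE i A j (fE i m) = ch i A j (R i A j (c i (\<phi> m)))"
    proof -
      fix i m assume i: "i \<in> A" and m: "m \<in> {1..N}"
      have iI: "i \<in> {1..n}" using A i by auto
      have mem: "fE i m \<in> \<psi> i ` (c i ` X)" unfolding fE_def using \<phi>X m by blast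
      have "inv_into (c i ` X) (\<psi> i) (fE i m) = c i (\<phi> m)"
        unfolding fE_def using \<psi>[OF iI] \<phi>X[OF m] by (simp add: inv_into_f_f)
      thus "FE i A j (fE i m) = ch i A j (R i A j (c i (\<phi> m)))" unfolding FE_def using mem by simp
    qed
    have ex: "\<exists>m'. m'\<in>{1..N} \<and> restr A (\<lambda>i. FE i A j (fE i m')) = restr A (\<lambda>i. FE i A j (fE i m))" using m by blast
    define m' where "m' = (SOME m'. m'\<in>{1..N} \<and> restr A (\<lambda>i. FE i A j (fE i m')) = restr A (\<lambda>i. FE i A j (fE i m)))"
    have m': "m'\<in>{1..N}" "restr A (\<lambda>i. FE i A j (fE i m')) = restr A (\<lambda>i. FE i A j (fE i m))"
      using someI_ex[OF ex] unfolding m'_def by auto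
    have "\<forall>i\<in>A. R i A j (c i (\<phi> m')) = R i A j (c i (\<phi> m))"
    proof
      fix i assume i: "i \<in> A"
      have "FE i A j (fE i m') = FE i A j (fE i m)" using m'(2) i by (simp add: restr_eq)
      hence "ch i A j (R i A j (c i (\<phi> m'))) = ch i A j (R i A j (c i (\<phi> m)))"
        using FEe[OF i m'(1)] FEe[OF i m] by simp
      moreover have "inj_on (ch i A j) (R i A j ` c i ` X)" using ch[OF j _ _ i] A by auto
      ultimately show "R i A j (c i (\<phi> m')) = R i A j (c i (\<phi> m))"
        using \<phi>X[OF m] \<phi>X[OF m'(1)] by (meson image_eqI inj_onD)
    qed
    hence "c j (\<phi> m') = c j (\<phi> m)" using rep j A \<phi>X m m'(1) by blast
    hence "fE j m' = fE j m" unfolding fE_def by simp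
    thus "FD j A (restr A (\<lambda>i. FE i A j (fE i m))) = fE j m"
      unfolding FD_def m'_def[symmetric] using m by auto
  qed
  show ?thesis unfolding ER_code_def using N1 Nd K part1 part2 part3 by blast
qed




lemma coeffs_unique:
  fixes a a' :: "nat \<Rightarrow> nat" and P :: "nat set"
  assumes fin: "finite P" and cP: "card P \<ge> \<kappa>"
    and eq: "\<forall>x\<in>P. (\<Sum>t<\<kappa>. a t * x^t) = (\<Sum>t<\<kappa>. a' t * x^t)"
  shows "\<forall>t<\<kappa>. a t = a' t"
proof (cases "\<kappa> = 0")
  case True then show ?thesis by simp
next
  case False
  define p :: "real poly" where "p = (\<Sum>t<\<kappa>. monom (real (a t)) t)"
  define p' :: "real poly" where "p' = (\<Sum>t<\<kappa>. monom (real (a' t)) t)"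
  have dp: "degree p \<le> \<kappa> - 1" unfolding p_def
    by (rule degree_sum_le) (auto intro: order.trans[OF degree_monom_le])
  have dp': "degree p' \<le> \<kappa> - 1" unfolding p'_def
    by (rule degree_sum_le) (auto intro: order.trans[OF degree_monom_le])
  have pv: "poly p (real x) = real (\<Sum>t<\<kappa>. a t * x^t)" for x
    unfolding p_def by (simp add: poly_sum poly_monom)
  have pv': "poly p' (real x) = real (\<Sum>t<\<kappa>. a' t * x^t)" for x
    unfolding p'_def by (simp add: poly_sum poly_monom)
  have cardA: "card (real ` P) = card P" by (simp add: card_image)
  have "p = p'"
  proof (rule poly_eqI_degree[of "real ` P"])
    fix y assume "y \<in> real ` P"
    then obtain x where "x \<in> P" "y = real x" by blast
    have "(\<Sum>t<\<kappa>. a t * x^t) = (\<Sum>t<\<kappa>. a' t * x^t)" using eq \<open>x \<in> P\<close> by blast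
    thus "poly p y = poly p' y" unfolding \<open>y = real x\<close> pv pv' by presburger
  next
    show "degree p < card (real ` P)" using dp cP cardA False by linarith
  next
    show "degree p' < card (real ` P)" using dp' cP cardA False by linarith
  qed
  have cp: "coeff p t = real (a t)" if "t < \<kappa>" for t
    unfolding p_def coeff_sum using that by (simp add: sum.delta)
  have cp': "coeff p' t = real (a' t)" if "t < \<kappa>" for t
    unfolding p'_def coeff_sum using that by (simp add: sum.delta)
  show ?thesis using cp cp' \<open>p = p'\<close> by (metis of_nat_eq_iff)
qed

lemma card_inter_lower:
  assumes "finite U" "S \<subseteq> U" "A \<subseteq> U"
  shows "card S \<le> card (S \<inter> A) + (card U - card A)"
proof -
  have "S \<subseteq> (S \<inter> A) \<union> (U - A)" using assms by blast
  hence "card S \<le> card ((S \<inter> A) \<union> (U - A))" using assms by (intro card_mono) (auto intro: finite_subset[of _ U])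
  also have "\<dots> \<le> card (S \<inter> A) + card (U - A)" by (rule card_Un_le)
  also have "card (U - A) = card U - card A" using assms by (simp add: card_Diff_subset finite_subset)
  finally show ?thesis .
qed

definition Lay :: "nat \<Rightarrow> nat \<Rightarrow> nat set set" where
  "Lay n r = {S. S \<subseteq> {1..n} \<and> card S = r}"

lemma card_Lay: "card (Lay n r) = n choose r"
  unfolding Lay_def using n_subsets[of "{1..n}" r] by simp

lemma finite_Lay: "finite (Lay n r)"
  unfolding Lay_def by (rule finite_subset[of _ "Pow {1..n}"]) auto

lemma card_Lay1:
  assumes "i \<in> {1..n}"
  shows "card {S\<in>Lay n r. i \<in> S} \<le> (n - 1) choose (r - 1)"
proof -
  have sub: "{S\<in>Lay n r. i \<in> S} \<subseteq> insert i ` {T. T \<subseteq> {1..n}-{i} \<and> card T = r - 1}"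
  proof
    fix S assume S: "S \<in> {S\<in>Lay n r. i \<in> S}"
    hence "S = insert i (S - {i})" "S - {i} \<subseteq> {1..n}-{i}" "card (S - {i}) = r - 1"
      unfolding Lay_def by (auto simp: finite_subset)
    thus "S \<in> insert i ` {T. T \<subseteq> {1..n}-{i} \<and> card T = r - 1}" by blast
  qed
  have "card {S\<in>Lay n r. i \<in> S} \<le> card (insert i ` {T. T \<subseteq> {1..n}-{i} \<and> card T = r - 1})"
    by (rule card_mono[OF _ sub]) (auto intro: finite_subset[of _ "Pow {1..n}"])
  also have "\<dots> \<le> card {T. T \<subseteq> {1..n}-{i} \<and> card T = r - 1}" by (rule card_image_le) (auto intro: finite_subset[of _ "Pow {1..n}"])
  also have "\<dots> = card ({1..n}-{i}) choose (r - 1)" by (rule n_subsets) auto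
  also have "card ({1..n}-{i}) = n - 1" using assms by simp
  finally show ?thesis .
qed

lemma card_Lay2:
  assumes "i \<in> {1..n}" "j \<in> {1..n}" "i \<noteq> j"
  shows "card {S\<in>Lay n r. i \<in> S \<and> j \<in> S} \<le> (n - 2) choose (r - 2)"
proof -
  have sub: "{S\<in>Lay n r. i \<in> S \<and> j \<in> S} \<subseteq> (\<lambda>T. T \<union> {i,j}) ` {T. T \<subseteq> {1..n}-{i,j} \<and> card T = r - 2}"
  proof
    fix S assume S: "S \<in> {S\<in>Lay n r. i \<in> S \<and> j \<in> S}"
    hence fS: "finite S" unfolding Lay_def by (auto simp: finite_subset)
    have "S = (S - {i,j}) \<union> {i,j}" "S - {i,j} \<subseteq> {1..n}-{i,j}" using S unfolding Lay_def by auto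
    moreover have "card (S - {i,j}) = r - 2" using S fS assms(3) unfolding Lay_def
      by (simp add: card_Diff_subset)
    ultimately show "S \<in> (\<lambda>T. T \<union> {i,j}) ` {T. T \<subseteq> {1..n}-{i,j} \<and> card T = r - 2}" by blast
  qed
  have "card {S\<in>Lay n r. i \<in> S \<and> j \<in> S} \<le> card ((\<lambda>T. T \<union> {i,j}) ` {T. T \<subseteq> {1..n}-{i,j} \<and> card T = r - 2})"
    by (rule card_mono[OF _ sub]) (auto intro: finite_subset[of _ "Pow {1..n}"])
  also have "\<dots> \<le> card {T. T \<subseteq> {1..n}-{i,j} \<and> card T = r - 2}" by (rule card_image_le) (auto intro: finite_subset[of _ "Pow {1..n}"])
  also have "\<dots> = card ({1..n}-{i,j}) choose (r - 2)" by (rule n_subsets) auto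
  also have "card ({1..n}-{i,j}) = n - 2" using assms by (simp add: card_Diff_subset)
  finally show ?thesis .
qed




lemma layered_ER:
  fixes n \<tau>1 \<tau>2 r q t :: nat
  assumes t2: "1 \<le> \<tau>2" "\<tau>2 \<le> \<tau>1" and r: "\<tau>1 < r" "r \<le> n" and q: "q \<ge> 1" and t: "t \<ge> 1"
  shows "ER_code n (n-\<tau>1) (n-\<tau>2) (q^((n choose r) * (r-\<tau>1)))
     ((q * (r-\<tau>1) * n^(r-\<tau>1) + 1)^((n-1) choose (r-1)))
     ((q * (r-\<tau>1) * n^(r-\<tau>1) + 1)^(((n-2) choose (r-2)) * t))"
proof -
  define \<kappa> where "\<kappa> = r - \<tau>1"
  define B where "B = q * \<kappa> * n^\<kappa>"
  define X where "X = PiE (Lay n r \<times> {..<\<kappa>}) (\<lambda>_. {..<q})"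
  define ev where "ev m S x = (\<Sum>t'<\<kappa>. m (S,t') * x^t')" for m :: "nat set \<times> nat \<Rightarrow> nat" and S and x :: nat
  define L1 where "L1 i = {S\<in>Lay n r. i \<in> S}" for i
  define L2 where "L2 i j = {S\<in>Lay n r. i \<in> S \<and> j \<in> S}" for i j
  define c where "c i m = restrict (\<lambda>S. ev m S i) (L1 i)" for i m
  define R where "R i (A::nat set) j y = restrict y (L2 i j)" for i A j and y :: "nat set \<Rightarrow> nat"
  have finX: "finite X" unfolding X_def by (intro finite_PiE) (auto simp: finite_Lay)
  have neX: "X \<noteq> {}" unfolding X_def using q by (auto simp: PiE_eq_empty_iff) (metis Suc_le_eq lessThan_iff emptyE)
  have cardX: "card X = q^((n choose r) * \<kappa>)"
    unfolding X_def by (simp add: card_PiE finite_Lay card_cartesian_product card_Lay)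
  have evB: "ev m S x \<le> B" if m: "m \<in> X" and x: "x \<le> n" and S: "S \<in> Lay n r" for m S x
  proof -
    have "ev m S x \<le> (\<Sum>t'<\<kappa>. q * n^\<kappa>)" unfolding ev_def
    proof (rule sum_mono)
      fix t' assume t': "t' \<in> {..<\<kappa>}"
      have "(S,t') \<in> Lay n r \<times> {..<\<kappa>}" using S t' by auto
      hence "m (S,t') \<le> q" using m unfolding X_def by (auto simp: PiE_iff less_imp_le)
      moreover have "x^t' \<le> n^\<kappa>"
      proof -
        have "x^t' \<le> n^t'" using x by (rule power_mono) simp
        also have "\<dots> \<le> n^\<kappa>" using t' r by (intro power_increasing) auto
        finally show ?thesis .
      qed
      ultimately show "m (S,t') * x^t' \<le> q * n^\<kappa>" by (rule mult_le_mono)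
    qed
    also have "\<dots> = B" unfolding B_def by simp
    finally show ?thesis .
  qed
  show ?thesis unfolding \<kappa>_def[symmetric] B_def[symmetric]
  proof (rule abstract_ER[where X=X and c=c and R=R])
    show "finite X" "X \<noteq> {}" by (fact finX, fact neX)
    show "card X = q^((n choose r) * \<kappa>)" by (fact cardX)
    show "1 \<le> (B+1)^((n-1) choose (r-1))" by simp
    show "1 \<le> (B+1)^(((n-2) choose (r-2)) * t)" by simp
    show "\<forall>i\<in>{1..n}. card (c i ` X) \<le> (B+1)^((n-1) choose (r-1))"
    proof
      fix i assume i: "i \<in> {1..n}"
      have "c i ` X \<subseteq> PiE (L1 i) (\<lambda>_. {0..B})"
      proof (rule image_subsetI)
        fix m assume "m \<in> X"
        thus "c i m \<in> PiE (L1 i) (\<lambda>_. {0..B})" unfolding c_def restrict_PiE_iff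
          using evB i by (auto simp: L1_def)
      qed
      hence "card (c i ` X) \<le> card (PiE (L1 i) (\<lambda>_. {0..B}))"
        by (intro card_mono) (auto simp: L1_def finite_Lay intro!: finite_PiE)
      also have "\<dots> = (B+1)^(card (L1 i))" by (simp add: card_PiE L1_def finite_Lay)
      also have "\<dots> \<le> (B+1)^((n-1) choose (r-1))"
        using card_Lay1[OF i, of r] unfolding L1_def by (intro power_increasing) auto
      finally show "card (c i ` X) \<le> (B+1)^((n-1) choose (r-1))" .
    qed
    show "\<forall>j\<in>{1..n}. \<forall>A. A \<subseteq> {1..n} - {j} \<and> card A = n - \<tau>2 \<longrightarrow>
          (\<forall>i\<in>A. card (R i A j ` c i ` X) \<le> (B+1)^(((n-2) choose (r-2)) * t))"
    proof (intro ballI allI impI)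
      fix j A i assume j: "j \<in> {1..n}" and A: "A \<subseteq> {1..n} - {j} \<and> card A = n - \<tau>2" and i: "i \<in> A"
      have i': "i \<in> {1..n}" "i \<noteq> j" using A i by auto
      have "R i A j ` c i ` X \<subseteq> PiE (L2 i j) (\<lambda>_. {0..B})"
      proof (rule subsetI)
        fix z assume "z \<in> R i A j ` c i ` X"
        then obtain m where "m \<in> X" "z = R i A j (c i m)" by blast
        have "R i A j (c i m) = restrict (\<lambda>S. ev m S i) (L2 i j)"
          unfolding R_def c_def L1_def L2_def by (auto simp: restrict_def fun_eq_iff)
        thus "z \<in> PiE (L2 i j) (\<lambda>_. {0..B})" unfolding \<open>z = R i A j (c i m)\<close> restrict_PiE_iff
          using evB i' \<open>m \<in> X\<close> by (auto simp: L2_def)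
      qed
      hence "card (R i A j ` c i ` X) \<le> card (PiE (L2 i j) (\<lambda>_. {0..B}))"
        by (intro card_mono) (auto simp: L2_def finite_Lay intro!: finite_PiE)
      also have "\<dots> = (B+1)^(card (L2 i j))" by (simp add: card_PiE L2_def finite_Lay)
      also have "\<dots> \<le> (B+1)^((n-2) choose (r-2))"
        using card_Lay2[OF i'(1) j i'(2), of r] unfolding L2_def by (intro power_increasing) auto
      also have "\<dots> \<le> (B+1)^(((n-2) choose (r-2)) * t)"
        using t by (intro power_increasing) auto
      finally show "card (R i A j ` c i ` X) \<le> (B+1)^(((n-2) choose (r-2)) * t)" .
    qed
    have coef: "\<forall>t'<\<kappa>. m (S,t') = m' (S,t')"
      if "finite P" "card P \<ge> \<kappa>" "\<forall>x\<in>P. ev m S x = ev m' S x" for P m m' S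
      using coeffs_unique[of P \<kappa> "\<lambda>t'. m (S,t')" "\<lambda>t'. m' (S,t')"] that unfolding ev_def by blast
    show "\<forall>A. A \<subseteq> {1..n} \<and> card A = n - \<tau>1 \<longrightarrow> (\<forall>m\<in>X. \<forall>m'\<in>X. (\<forall>i\<in>A. c i m = c i m') \<longrightarrow> m = m')"
    proof (intro allI impI ballI)
      fix A m m' assume A: "A \<subseteq> {1..n} \<and> card A = n - \<tau>1" and m: "m \<in> X" and m': "m' \<in> X"
        and eq: "\<forall>i\<in>A. c i m = c i m'"
      show "m = m'"
      proof (rule PiE_ext[OF m[unfolded X_def] m'[unfolded X_def]])
        fix p assume p: "p \<in> Lay n r \<times> {..<\<kappa>}"
        then obtain S t' where St: "p = (S,t')" "S \<in> Lay n r" "t' < \<kappa>" by auto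
        have SU: "S \<subseteq> {1..n}" "card S = r" using St unfolding Lay_def by auto
        have "card S \<le> card (S \<inter> A) + (card {1..n} - card A)"
          using A SU by (intro card_inter_lower) auto
        hence cP: "card (S \<inter> A) \<ge> \<kappa>" using A SU r t2 unfolding \<kappa>_def by simp
        have "\<forall>x\<in>S \<inter> A. ev m S x = ev m' S x"
        proof
          fix x assume x: "x \<in> S \<inter> A"
          hence "S \<in> L1 x" using St unfolding L1_def by auto
          moreover have "c x m S = c x m' S" using eq x by simp
          ultimately show "ev m S x = ev m' S x" unfolding c_def by simp
        qed
        hence "\<forall>t'<\<kappa>. m (S,t') = m' (S,t')" using coef[of "S \<inter> A"] cP SU by (meson finite_Int finite_subset finite_atLeastAtMost)
        thus "m p = m' p" using St by simp
      qed
    qed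
    show "\<forall>j\<in>{1..n}. \<forall>A. A \<subseteq> {1..n} - {j} \<and> card A = n - \<tau>2 \<longrightarrow>
        (\<forall>m\<in>X. \<forall>m'\<in>X. (\<forall>i\<in>A. R i A j (c i m) = R i A j (c i m')) \<longrightarrow> c j m = c j m')"
    proof (intro ballI allI impI)
      fix j A m m' assume j: "j \<in> {1..n}" and A: "A \<subseteq> {1..n} - {j} \<and> card A = n - \<tau>2"
        and m: "m \<in> X" and m': "m' \<in> X" and eq: "\<forall>i\<in>A. R i A j (c i m) = R i A j (c i m')"
      show "c j m = c j m'" unfolding c_def
      proof (rule restrict_ext)
        fix S assume S: "S \<in> L1 j"
        have SU: "S \<subseteq> {1..n}" "card S = r" "j \<in> S" using S unfolding L1_def Lay_def by auto
        have "card (S - {j}) \<le> card ((S - {j}) \<inter> A) + (card ({1..n} - {j}) - card A)"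
          using A SU by (intro card_inter_lower) auto
        moreover have "(S - {j}) \<inter> A = S \<inter> A" using A by auto
        moreover have "card (S - {j}) = r - 1" using SU by (simp add: finite_subset)
        moreover have "card ({1..n} - {j}) = n - 1" using j by simp
        ultimately have cP: "card (S \<inter> A) \<ge> \<kappa>" using A SU r t2 unfolding \<kappa>_def by simp
        have "\<forall>x\<in>S \<inter> A. ev m S x = ev m' S x"
        proof
          fix x assume x: "x \<in> S \<inter> A"
          hence in2: "S \<in> L2 x j" "S \<in> L1 x" using S unfolding L2_def L1_def by auto
          have "R x A j (c x m) S = R x A j (c x m') S" using eq x by simp
          thus "ev m S x = ev m' S x" unfolding R_def c_def using in2 by simp
        qed
        hence cf: "\<forall>t'<\<kappa>. m (S,t') = m' (S,t')" using coef[of "S \<inter> A"] cP SU by (meson finite_Int finite_subset finite_atLeastAtMost)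
        show "ev m S j = ev m' S j" unfolding ev_def using cf by simp
      qed
    qed
  qed
qed




lemma layered_achievable:
  fixes n \<tau>1 \<tau>2 r t :: nat
  assumes t2: "1 \<le> \<tau>2" "\<tau>2 \<le> \<tau>1" and r: "\<tau>1 < r" "r \<le> n" and t: "t \<ge> 1"
  shows "achievable n (n-\<tau>1) (n-\<tau>2) (real ((n-1) choose (r-1)) / (real ((n-2) choose (r-2)) * t))
           (real (n choose r) * (r - \<tau>1) / (real ((n-2) choose (r-2)) * t))"
  unfolding achievable_def
proof (intro allI impI)
  fix \<epsilon> :: real assume \<epsilon>: "\<epsilon> > 0"
  define \<kappa> where "\<kappa> = r - \<tau>1"
  define a where "a = (n-1) choose (r-1)"
  define b where "b = (n-2) choose (r-2)"
  define L where "L = n choose r"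
  define M0 where "M0 = real L * \<kappa> / (real b * t)"
  define D where "D = real (\<kappa> * n^\<kappa> + 1)"
  define q where "q = nat \<lceil>exp (M0 * ln D / \<epsilon>)\<rceil> + 2"
  define B where "B = q * \<kappa> * n^\<kappa>"
  have \<kappa>1: "\<kappa> \<ge> 1" using r unfolding \<kappa>_def by simp
  have n1: "n \<ge> 1" using r t2 by simp
  have b0: "b > 0" unfolding b_def using r t2 by (simp add: zero_less_binomial)
  have q2: "q \<ge> 2" unfolding q_def by simp
  have B1: "B \<ge> 1" unfolding B_def using q2 \<kappa>1 n1 by simp
  have D1: "D \<ge> 1" unfolding D_def by simp
  have M00: "M0 \<ge> 0" unfolding M0_def by simp
  have code: "ER_code n (n-\<tau>1) (n-\<tau>2) (q^(L * \<kappa>)) ((B+1)^a) ((B+1)^(b * t))"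
    using layered_ER[OF t2 r _ t, of q] q2 unfolding L_def \<kappa>_def B_def a_def b_def by simp
  have lnB: "ln (real (B+1)) > 0" using B1 by simp
  have lnq: "ln (real q) \<ge> M0 * ln D / \<epsilon>"
  proof -
    have "exp (M0 * ln D / \<epsilon>) \<le> real q" unfolding q_def by linarith
    hence "ln (exp (M0 * ln D / \<epsilon>)) \<le> ln (real q)" using q2 by (subst ln_le_cancel_iff) auto
    thus ?thesis by simp
  qed
  have lnq0: "ln (real q) > 0" using q2 by simp
  have Bq: "real (B+1) \<le> real q * D"
  proof -
    have "B + 1 \<le> q * (\<kappa> * n^\<kappa> + 1)" unfolding B_def using q2 by (simp add: algebra_simps)
    hence "real (B+1) \<le> real (q * (\<kappa> * n^\<kappa> + 1))" by linarith
    thus ?thesis unfolding D_def by (simp add: algebra_simps)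
  qed
  have lnBq: "ln (real (B+1)) \<le> ln (real q) + ln D"
  proof -
    have "ln (real (B+1)) \<le> ln (real q * D)" using Bq B1 by (subst ln_le_cancel_iff) auto
    also have "\<dots> = ln (real q) + ln D" using q2 D1 by (simp add: ln_mult)
    finally show ?thesis .
  qed
  have ratio1: "ln (real ((B+1)^a)) / ln (real ((B+1)^(b*t))) = real a / (real b * t)"
    using lnB b0 t by (simp add: ln_realpow[symmetric] del: of_nat_power) (simp add: ln_realpow)
  have ratio2: "ln (real (q^(L*\<kappa>))) / ln (real ((B+1)^(b*t))) = M0 * (ln q / ln (real (B+1)))"
    unfolding M0_def using lnB b0 t q2 by (simp add: ln_realpow)
  have lnD0: "ln D \<ge> 0" using D1 by simp
  have key: "M0 - \<epsilon> \<le> M0 * (ln q / ln (real (B+1)))"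
  proof -
    have "(M0 - \<epsilon>) * ln (real (B+1)) \<le> M0 * ln q"
    proof (cases "M0 \<le> \<epsilon>")
      case True
      hence "(M0 - \<epsilon>) * ln (real (B+1)) \<le> 0" using lnB by (simp add: mult_nonpos_nonneg)
      also have "0 \<le> M0 * ln q" using M00 lnq0 by simp
      finally show ?thesis .
    next
      case False
      have "(M0 - \<epsilon>) * ln (real (B+1)) \<le> (M0 - \<epsilon>) * (ln q + ln D)"
        using False lnBq by (intro mult_left_mono) auto
      also have "\<dots> = M0 * ln q - \<epsilon> * ln q + (M0 - \<epsilon>) * ln D" by (simp add: algebra_simps)
      also have "\<epsilon> * ln q \<ge> M0 * ln D" using lnq \<epsilon> by (simp add: field_simps)
      hence "M0 * ln q - \<epsilon> * ln q + (M0 - \<epsilon>) * ln D \<le> M0 * ln q"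
      proof -
        have "\<epsilon> * ln D \<ge> 0" using lnD0 \<epsilon> by simp
        moreover have "(M0 - \<epsilon>) * ln D = M0 * ln D - \<epsilon> * ln D" by (simp add: left_diff_distrib)
        ultimately show ?thesis using \<open>\<epsilon> * ln q \<ge> M0 * ln D\<close> by linarith
      qed
      finally show ?thesis .
    qed
    thus ?thesis using lnB by (simp add: field_simps)
  qed
  show "\<exists>N Nd K. ER_code n (n - \<tau>1) (n - \<tau>2) N Nd K \<and>
          ln (real Nd) / ln (real K) \<le> real ((n-1) choose (r-1)) / (real ((n-2) choose (r-2)) * real t) + \<epsilon> \<and>
          real (n choose r) * real (r - \<tau>1) / (real ((n-2) choose (r-2)) * real t) - \<epsilon> \<le> ln (real N) / ln (real K)"
    apply (rule exI[of _ "q^(L * \<kappa>)"], rule exI[of _ "(B+1)^a"], rule exI[of _ "(B+1)^(b * t)"])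
    using code ratio1 ratio2 key \<epsilon> unfolding a_def b_def L_def M0_def \<kappa>_def by simp
qed




lemma card_image_factor:
  assumes "finite A" "\<forall>x\<in>A. \<forall>y\<in>A. g x = g y \<longrightarrow> f x = f y"
  shows "card (f ` A) \<le> card (g ` A)"
proof -
  have "f ` A = (\<lambda>z. f (inv_into A g z)) ` (g ` A)"
  proof
    show "f ` A \<subseteq> (\<lambda>z. f (inv_into A g z)) ` (g ` A)"
    proof
      fix y assume "y \<in> f ` A"
      then obtain x where x: "x \<in> A" "y = f x" by blast
      have "inv_into A g (g x) \<in> A" "g (inv_into A g (g x)) = g x"
        using x by (auto intro: inv_into_into f_inv_into_f)
      hence "f (inv_into A g (g x)) = f x" using assms(2) x by blast
      thus "y \<in> (\<lambda>z. f (inv_into A g z)) ` (g ` A)" using x by force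
    qed
  next
    show "(\<lambda>z. f (inv_into A g z)) ` (g ` A) \<subseteq> f ` A"
      by (auto intro: inv_into_into)
  qed
  thus ?thesis using assms by (metis card_image_le finite_imageI)
qed

lemma card_lists_bound:
  assumes "\<forall>x\<in>F. set x \<subseteq> {1..K} \<and> length x = L"
  shows "card F \<le> K ^ L"
proof -
  have "card F \<le> card {xs. set xs \<subseteq> {1..K} \<and> length xs = L}"
    using assms by (intro card_mono) (auto intro: finite_lists_length_eq)
  also have "\<dots> = K ^ L" by (simp add: card_lists_length_eq)
  finally show ?thesis .
qed

lemma cutset_nat:
  assumes code: "ER_code n k d N Nd K" and kd: "k \<le> d" and dn: "d < n"
  shows "N \<le> (\<Prod>l<k. min Nd (K ^ (d - l)))"
proof -
  obtain fE fD FE FD where all: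
      "(\<forall>i\<in>{1..n}. \<forall>m\<in>{1..N}. fE i m \<in> {1..Nd}) \<and>
       (\<forall>A. A \<subseteq> {1..n} \<and> card A = k \<longrightarrow>
          (\<forall>t\<in>tuple_on A Nd. fD A t \<in> {1..N}) \<and>
          (\<forall>m\<in>{1..N}. fD A (restr A (\<lambda>i. fE i m)) = m)) \<and>
       (\<forall>j\<in>{1..n}. \<forall>A. A \<subseteq> {1..n} - {j} \<and> card A = d \<longrightarrow>
          (\<forall>i\<in>A. \<forall>x\<in>{1..Nd}. FE i A j x \<in> {1..K}) \<and>
          (\<forall>t\<in>tuple_on A K. FD j A t \<in> {1..Nd}) \<and>
          (\<forall>m\<in>{1..N}. FD j A (restr A (\<lambda>i. FE i A j (fE i m))) = fE j m))"
    using code[unfolded ER_code_def, THEN conjunct2, THEN conjunct2, THEN conjunct2] by (elim exE) (erule that)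
  have enc: "\<forall>i\<in>{1..n}. \<forall>m\<in>{1..N}. fE i m \<in> {1..Nd}" using all by (rule conjunct1)
  have decA: "\<And>A m. A \<subseteq> {1..n} \<Longrightarrow> card A = k \<Longrightarrow> m\<in>{1..N} \<Longrightarrow> fD A (restr A (\<lambda>i. fE i m)) = m"
    using all[THEN conjunct2, THEN conjunct1] by blast
  have repA1: "\<And>j A i x. j\<in>{1..n} \<Longrightarrow> A \<subseteq> {1..n} - {j} \<Longrightarrow> card A = d \<Longrightarrow> i \<in> A \<Longrightarrow> x\<in>{1..Nd} \<Longrightarrow> FE i A j x \<in> {1..K}"
    using all[THEN conjunct2, THEN conjunct2] by blast
  have repA2: "\<And>j A m. j\<in>{1..n} \<Longrightarrow> A \<subseteq> {1..n} - {j} \<Longrightarrow> card A = d \<Longrightarrow> m\<in>{1..N} \<Longrightarrow> FD j A (restr A (\<lambda>i. FE i A j (fE i m))) = fE j m"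
    using all[THEN conjunct2, THEN conjunct2] by blast
  define X where "X = {1..N}"
  define \<Phi> where "\<Phi> l m = map (\<lambda>i. fE i m) [1..<l+1]" for l m
  have finX: "finite X" unfolding X_def by simp
  have step: "card (\<Phi> l ` X) \<le> (\<Prod>i<l. min Nd (K ^ (d - i)))" if "l \<le> k" for l
    using that
  proof (induction l)
    case 0
    have "\<Phi> 0 ` X \<subseteq> {[]}" unfolding \<Phi>_def by auto
    hence "card (\<Phi> 0 ` X) \<le> card {[]::nat list}" by (intro card_mono) auto
    hence "card (\<Phi> 0 ` X) \<le> 1" by simp
    thus ?case by simp
  next
    case (Suc l)
    hence lk: "l < k" by simp
    define j where "j = Suc l"
    define H where "H = {1..d+1} - {j}"
    have jn: "j \<in> {1..n}" using lk kd dn unfolding j_def by simp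
    have Hsub: "H \<subseteq> {1..n} - {j}" unfolding H_def using dn by auto
    have cH: "card H = d" unfolding H_def using lk kd j_def by simp
    have FErange: "\<forall>i\<in>H. \<forall>x\<in>{1..Nd}. FE i H j x \<in> {1..K}" using repA1[OF jn Hsub cH] by blast
    have FDeq: "\<forall>m\<in>{1..N}. FD j H (restr H (\<lambda>i. FE i H j (fE i m))) = fE j m" using repA2[OF jn Hsub cH] by blast
    define F where "F v = {m\<in>X. \<Phi> l m = v}" for v
    define \<rho> where "\<rho> m = map (\<lambda>i. FE i H j (fE i m)) [l+2..<d+2]" for m
    have fib: "card ((\<lambda>m. fE j m) ` F v) \<le> min Nd (K ^ (d - l))" for v
    proof -
      have "(\<lambda>m. fE j m) ` F v \<subseteq> {1..Nd}" using enc jn unfolding F_def X_def by auto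
      hence c1: "card ((\<lambda>m. fE j m) ` F v) \<le> Nd" by (metis card_atLeastAtMost card_mono diff_Suc_1 finite_atLeastAtMost)
      have "card ((\<lambda>m. fE j m) ` F v) \<le> card (\<rho> ` F v)"
      proof (rule card_image_factor)
        show "finite (F v)" unfolding F_def using finX by simp
        show "\<forall>x\<in>F v. \<forall>y\<in>F v. \<rho> x = \<rho> y \<longrightarrow> fE j x = fE j y"
        proof (intro ballI impI)
          fix x y assume x: "x \<in> F v" and y: "y \<in> F v" and eq: "\<rho> x = \<rho> y"
          have "\<forall>i\<in>H. FE i H j (fE i x) = FE i H j (fE i y)"
          proof
            fix i assume i: "i \<in> H"
            show "FE i H j (fE i x) = FE i H j (fE i y)"
            proof (cases "i \<le> l")
              case True
              have "\<Phi> l x = \<Phi> l y" using x y unfolding F_def by simp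
              moreover have "i \<in> set [1..<l+1]" using True i unfolding H_def by auto
              ultimately have "fE i x = fE i y" unfolding \<Phi>_def map_eq_conv by blast
              thus ?thesis by simp
            next
              case False
              hence "i \<in> set [l+2..<d+2]" using i unfolding H_def j_def by auto
              thus ?thesis using eq unfolding \<rho>_def map_eq_conv by blast
            qed
          qed
          hence "restr H (\<lambda>i. FE i H j (fE i x)) = restr H (\<lambda>i. FE i H j (fE i y))" by (simp add: restr_eq)
          moreover have "x \<in> {1..N}" "y \<in> {1..N}" using x y unfolding F_def X_def by auto
          hence "FD j H (restr H (\<lambda>i. FE i H j (fE i x))) = fE j x"
                "FD j H (restr H (\<lambda>i. FE i H j (fE i y))) = fE j y" using FDeq by blast+
          ultimately show "fE j x = fE j y" by simp
        qed
      qed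
      also have "\<dots> \<le> K ^ (d - l)"
      proof (rule card_lists_bound)
        show "\<forall>x\<in>\<rho> ` F v. set x \<subseteq> {1..K} \<and> length x = d - l"
        proof
          fix z assume "z \<in> \<rho> ` F v"
          then obtain m where m: "m \<in> F v" "z = \<rho> m" by blast
          have mN: "m \<in> {1..N}" using m unfolding F_def X_def by auto
          have "set z \<subseteq> {1..K}"
          proof
            fix w assume "w \<in> set z"
            then obtain i where i: "i \<in> set [l+2..<d+2]" "w = FE i H j (fE i m)" using m unfolding \<rho>_def by auto
            have iH: "i \<in> H" using i unfolding H_def j_def by auto
            have "fE i m \<in> {1..Nd}" using enc mN iH Hsub by blast
            thus "w \<in> {1..K}" using FErange iH i by blast
          qed
          moreover have "length z = d - l" using m unfolding \<rho>_def by (simp only: length_map length_upt)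
          ultimately show "set z \<subseteq> {1..K} \<and> length z = d - l" by blast
        qed
      qed
      finally show ?thesis using c1 by simp
    qed
    have split: "\<Phi> (Suc l) ` X = (\<Union>v\<in>\<Phi> l ` X. (\<lambda>x. v @ [x]) ` ((\<lambda>m. fE j m) ` F v))"
    proof -
      have "\<Phi> (Suc l) m = \<Phi> l m @ [fE j m]" for m unfolding \<Phi>_def j_def by simp
      thus ?thesis unfolding F_def by (auto simp: image_iff) (metis)
    qed
    have "card (\<Phi> (Suc l) ` X) \<le> (\<Sum>v\<in>\<Phi> l ` X. card ((\<lambda>x. v @ [x]) ` ((\<lambda>m. fE j m) ` F v)))"
      unfolding split by (rule card_UN_le) (simp add: finX)
    also have "\<dots> \<le> (\<Sum>v\<in>\<Phi> l ` X. min Nd (K ^ (d - l)))"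
    proof (rule sum_mono)
      fix v
      have "finite (F v)" unfolding F_def using finX by simp
      hence "card ((\<lambda>x. v @ [x]) ` ((\<lambda>m. fE j m) ` F v)) \<le> card ((\<lambda>m. fE j m) ` F v)"
        by (intro card_image_le) simp
      thus "card ((\<lambda>x. v @ [x]) ` ((\<lambda>m. fE j m) ` F v)) \<le> min Nd (K ^ (d - l))" using fib[of v] by linarith
    qed
    also have "\<dots> = card (\<Phi> l ` X) * min Nd (K ^ (d - l))" by simp
    also have "\<dots> \<le> (\<Prod>i<l. min Nd (K ^ (d - i))) * min Nd (K ^ (d - l))"
      using Suc.IH lk by (intro mult_right_mono) auto
    also have "\<dots> = (\<Prod>i<Suc l. min Nd (K ^ (d - i)))" by simp
    finally show ?case .
  qed
  have inj: "inj_on (\<Phi> k) X"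
  proof (rule inj_onI)
    fix x y assume x: "x \<in> X" and y: "y \<in> X" and eq: "\<Phi> k x = \<Phi> k y"
    have A: "{1..k} \<subseteq> {1..n} \<and> card {1..k} = k" using kd dn by auto
    have "\<forall>i\<in>{1..k}. fE i x = fE i y" using eq unfolding \<Phi>_def by auto
    hence "restr {1..k} (\<lambda>i. fE i x) = restr {1..k} (\<lambda>i. fE i y)" by (simp add: restr_eq)
    moreover have "fD {1..k} (restr {1..k} (\<lambda>i. fE i x)) = x" "fD {1..k} (restr {1..k} (\<lambda>i. fE i y)) = y"
      using decA A x y unfolding X_def by auto
    ultimately show "x = y" by simp
  qed
  have "N = card (\<Phi> k ` X)" using inj unfolding X_def by (simp add: card_image)
  also have "\<dots> \<le> (\<Prod>l<k. min Nd (K ^ (d - l)))" using step by simp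
  finally show ?thesis .
qed

lemma cutset_ln:
  assumes code: "ER_code n k d N Nd K" and kd: "k \<le> d" and dn: "d < n"
  shows "ln (real N) \<le> (\<Sum>l<k. min (ln (real Nd)) (real (d - l) * ln (real K)))"
proof -
  have N1: "N \<ge> 1" "Nd \<ge> 1" "K \<ge> 1" using code unfolding ER_code_def by auto
  have "real N \<le> real (\<Prod>l<k. min Nd (K ^ (d - l)))" using cutset_nat[OF assms] by linarith
  also have "\<dots> = (\<Prod>l<k. min (real Nd) (real K ^ (d - l)))" by (simp add: of_nat_min)
  finally have le: "real N \<le> (\<Prod>l<k. min (real Nd) (real K ^ (d - l)))" .
  have pos: "\<And>l. min (real Nd) (real K ^ (d - l)) > 0" using N1 by simp
  have "ln (real N) \<le> ln (\<Prod>l<k. min (real Nd) (real K ^ (d - l)))"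
    using le N1 pos by (subst ln_le_cancel_iff) (auto intro: prod_pos)
  also have "\<dots> = (\<Sum>l<k. ln (min (real Nd) (real K ^ (d - l))))"
    using pos by (intro ln_prod) (auto simp: less_imp_neq[symmetric])
  also have "\<dots> = (\<Sum>l<k. min (ln (real Nd)) (real (d - l) * ln (real K)))"
  proof (rule sum.cong[OF refl])
    fix l
    have "ln (min (real Nd) (real K ^ (d - l))) = min (ln (real Nd)) (ln (real K ^ (d - l)))"
      using N1 by (cases "real Nd \<le> real K ^ (d - l)") (auto simp: min_def)
    also have "ln (real K ^ (d - l)) = real (d - l) * ln (real K)" using N1 by (simp add: ln_realpow)
    finally show "ln (min (real Nd) (real K ^ (d - l))) = min (ln (real Nd)) (real (d - l) * ln (real K))" .
  qed
  finally show ?thesis .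
qed




lemma achievable_mono:
  assumes "achievable n k d \<alpha> M" "\<alpha> \<le> \<alpha>'" "M' \<le> M"
  shows "achievable n k d \<alpha>' M'"
  using assms unfolding achievable_def by (meson add_right_mono diff_right_mono order.trans)

lemma sum_min_shift:
  fixes \<alpha> \<epsilon> :: real and w :: "nat \<Rightarrow> real"
  assumes "\<epsilon> \<ge> 0"
  shows "(\<Sum>l<k. min (\<alpha> + \<epsilon>) (w l)) \<le> (\<Sum>l<k. min \<alpha> (w l)) + real k * \<epsilon>"
proof -
  have "(\<Sum>l<k. min (\<alpha> + \<epsilon>) (w l)) \<le> (\<Sum>l<k. min \<alpha> (w l) + \<epsilon>)"
    by (rule sum_mono) (use assms in auto)
  also have "\<dots> = (\<Sum>l<k. min \<alpha> (w l)) + real k * \<epsilon>" by (simp add: sum.distrib)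
  finally show ?thesis .
qed

lemma achievable_cs:
  assumes ach: "achievable n k d \<alpha> M" and kd: "k \<le> d" and dn: "d < n"
  shows "M \<le> (\<Sum>l<k. min \<alpha> (real (d - l)))"
proof (rule field_le_epsilon)
  fix e :: real assume e: "e > 0"
  define \<epsilon> where "\<epsilon> = e / (real k + 1)"
  have \<epsilon>0: "\<epsilon> > 0" unfolding \<epsilon>_def using e by simp
  obtain N Nd K where code: "ER_code n k d N Nd K" and h1: "\<alpha> + \<epsilon> \<ge> ln (real Nd) / ln (real K)"
    and h2: "M - \<epsilon> \<le> ln (real N) / ln (real K)"
    using ach \<epsilon>0 unfolding achievable_def by blast
  have K1: "K \<ge> 1" "Nd \<ge> 1" "N \<ge> 1" using code unfolding ER_code_def by auto
  have main: "M - \<epsilon> \<le> (\<Sum>l<k. min (\<alpha> + \<epsilon>) (real (d - l)))"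
  proof (cases "K = 1")
    case True
    hence "M - \<epsilon> \<le> 0" using h2 by simp
    also have "0 \<le> (\<Sum>l<k. min (\<alpha> + \<epsilon>) (real (d - l)))"
      using h1 True by (intro sum_nonneg) simp
    finally show ?thesis .
  next
    case False
    hence lnK: "ln (real K) > 0" using K1 by simp
    have "ln (real N) \<le> (\<Sum>l<k. min (ln (real Nd)) (real (d - l) * ln (real K)))"
      by (rule cutset_ln[OF code kd dn])
    hence "ln (real N) / ln (real K) \<le> (\<Sum>l<k. min (ln (real Nd)) (real (d - l) * ln (real K))) / ln (real K)"
      using lnK by (simp add: divide_right_mono)
    also have "\<dots> = (\<Sum>l<k. min (ln (real Nd) / ln (real K)) (real (d - l)))"
      unfolding sum_divide_distrib using lnK by (intro sum.cong refl) (simp add: min_divide_distrib_right)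
    also have "\<dots> \<le> (\<Sum>l<k. min (\<alpha> + \<epsilon>) (real (d - l)))"
      using h1 by (intro sum_mono) auto
    finally show ?thesis using h2 by linarith
  qed
  also have "\<dots> \<le> (\<Sum>l<k. min \<alpha> (real (d - l))) + real k * \<epsilon>"
    using sum_min_shift[of \<epsilon> \<alpha> "\<lambda>l. real (d - l)" k] \<epsilon>0 by simp
  finally have "M \<le> (\<Sum>l<k. min \<alpha> (real (d - l))) + (real k + 1) * \<epsilon>" by (simp add: algebra_simps)
  also have "(real k + 1) * \<epsilon> = e" unfolding \<epsilon>_def by simp
  finally show "M \<le> (\<Sum>l<k. min \<alpha> (real (d - l))) + e" .
qed




lemma eset_bounds:
  fixes \<tau>1 \<tau>2 n :: nat and \<alpha> M :: real
  assumes t: "1 \<le> \<tau>2" "\<tau>2 \<le> \<tau>1" "\<tau>1 < n" and ach: "achievable n (n-\<tau>1) (n-\<tau>2) \<alpha> M"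
    and M0: "M > 0"
  shows "M \<le> real n * (real n * \<alpha> - M)" and "M \<le> real n ^ 2"
    and "M^2 \<le> real ((\<tau>1+1)^2 + 8 + 4*(\<tau>1+1)) * real n ^ 2 * (real n * \<alpha> - M)"
proof -
  define k where "k = n - \<tau>1"
  define d where "d = n - \<tau>2"
  define e where "e = \<tau>1 - \<tau>2"
  define s where "s = real n * \<alpha> - M"
  define C where "C = real ((\<tau>1+1)^2 + 8 + 4*(\<tau>1+1))"
  have k1: "k \<ge> 1" "k \<le> d" "d < n" "d = k + e" unfolding k_def d_def e_def using t by auto
  have nk: "real n = real k + real \<tau>1" unfolding k_def using t by simp
  have Mf: "M \<le> (\<Sum>l<k. min \<alpha> (real (d - l)))"
    using achievable_cs[OF ach[folded k_def d_def] k1(2) k1(3)] .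
  have fk: "(\<Sum>l<k. min \<alpha> (real (d - l))) \<le> real k * \<alpha>"
  proof -
    have "(\<Sum>l<k. min \<alpha> (real (d - l))) \<le> (\<Sum>l<k. \<alpha>)" by (rule sum_mono) simp
    thus ?thesis by simp
  qed
  have Mk: "M \<le> real k * \<alpha>" using Mf fk by linarith
  have a0: "\<alpha> > 0"
  proof (rule ccontr)
    assume "\<not> \<alpha> > 0"
    hence "real k * \<alpha> \<le> 0" by (simp add: mult_nonneg_nonpos)
    thus False using Mk M0 by linarith
  qed
  have t1: "real \<tau>1 \<ge> 1" using t by simp
  have ta: "real \<tau>1 * \<alpha> \<ge> \<alpha>" using t1 a0 by simp
  define g where "g = (\<Sum>l<k. \<alpha> - min \<alpha> (real (d - l)))"
  have g_eq: "g = real k * \<alpha> - (\<Sum>l<k. min \<alpha> (real (d - l)))" unfolding g_def by (simp add: sum_subtractf)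
  have g0: "g \<ge> 0" unfolding g_def by (intro sum_nonneg) simp
  have sg: "s \<ge> real \<tau>1 * \<alpha> + g" unfolding s_def using g_eq Mf nk by (simp add: algebra_simps)
  have sa: "s \<ge> \<alpha>" using sg g0 ta by linarith
  have Mn: "M \<le> real n * \<alpha>" using Mk nk a0 by (smt (verit) mult_right_mono of_nat_0_le_iff)
  show "M \<le> real n * (real n * \<alpha> - M)"
  proof -
    have "real n \<ge> 1" using t by simp
    hence "real n * \<alpha> \<le> real n * s" using sa by (simp add: mult_left_mono)
    thus ?thesis using Mn unfolding s_def by linarith
  qed
  have Mn2: "M \<le> real n ^ 2"
  proof -
    have "(\<Sum>l<k. min \<alpha> (real (d - l))) \<le> (\<Sum>l<k. real n)" using k1 by (intro sum_mono) auto
    also have "\<dots> = real k * real n" by simp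
    also have "\<dots> \<le> real n * real n" using nk by (intro mult_right_mono) auto
    finally show ?thesis using Mf by (simp add: power2_eq_square)
  qed
  thus "M \<le> real n ^ 2" .
  have M2: "M^2 \<le> real n ^ 2 * \<alpha>^2"
    using Mn M0 by (metis less_imp_le power_mono power_mult_distrib)
  define h where "h = nat \<lfloor>\<alpha> / 2\<rfloor>"
  define m where "m = min k (h - e)"
  have hle: "real h \<le> \<alpha> / 2" unfolding h_def using a0 by linarith
  have hge: "real h \<ge> \<alpha> / 2 - 1" unfolding h_def using a0 by linarith
  have gm: "g \<ge> real m * (\<alpha> / 2)"
  proof -
    have "g \<ge> (\<Sum>l\<in>{k-m..<k}. \<alpha> - min \<alpha> (real (d - l)))"
      unfolding g_def by (rule sum_mono2) auto
    moreover have "(\<Sum>l\<in>{k-m..<k}. \<alpha> - min \<alpha> (real (d - l))) \<ge> (\<Sum>l\<in>{k-m..<k}. \<alpha> / 2)"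
    proof (rule sum_mono)
      fix l assume l: "l \<in> {k-m..<k}"
      hence "m \<ge> 1" by auto
      hence "h - e \<ge> 1" unfolding m_def by simp
      have "d - l \<le> e + m" using l k1 unfolding m_def by auto
      also have "e + m \<le> h" using \<open>h - e \<ge> 1\<close> unfolding m_def by auto
      finally have "real (d - l) \<le> \<alpha> / 2" using hle by linarith
      thus "\<alpha> / 2 \<le> \<alpha> - min \<alpha> (real (d - l))" by linarith
    qed
    moreover have "(\<Sum>l\<in>{k-m..<k}. \<alpha> / 2) = real m * (\<alpha> / 2)" unfolding m_def by simp
    ultimately show ?thesis by linarith
  qed
  have Cpos: "C \<ge> 0" unfolding C_def by simp
  have n2s: "real n ^ 2 * s \<ge> 0" using sa a0 by simp
  have "M^2 \<le> C * real n ^ 2 * s"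
  proof (cases "m = k")
    case True
    hence "real h \<ge> real k" unfolding m_def by simp
    hence "\<alpha> / 2 \<ge> real k" using hle by linarith
    hence "g \<ge> real k * real k" using gm True by (smt (verit) mult_left_mono of_nat_0_le_iff)
    hence sk: "s \<ge> real k ^ 2" using sg ta a0 by (simp add: power2_eq_square) (smt (verit) mult_nonneg_nonneg of_nat_0_le_iff)
    have "real n \<le> real (\<tau>1+1) * real k" using nk k1 t1 by (simp add: algebra_simps)
    hence "real n ^ 2 \<le> (real (\<tau>1+1) * real k)^2" by (intro power_mono) auto
    also have "\<dots> = real ((\<tau>1+1)^2) * real k ^ 2" by (simp add: power_mult_distrib)
    also have "\<dots> \<le> real ((\<tau>1+1)^2) * s" using sk by (intro mult_left_mono) auto
    also have "\<dots> \<le> C * s" unfolding C_def using sa a0 by (intro mult_right_mono) auto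
    finally have nC: "real n ^ 2 \<le> C * s" .
    have "M^2 \<le> real n ^ 2 * real n ^ 2" using Mn2 M0 by (metis less_imp_le power2_eq_square mult_mono zero_le_power2 power_mono)
    also have "\<dots> \<le> real n ^ 2 * (C * s)" using nC by (intro mult_left_mono) auto
    finally show ?thesis by (simp add: algebra_simps)
  next
    case False
    hence mh: "m = h - e" unfolding m_def by simp
    show ?thesis
    proof (cases "\<alpha> \<ge> 4 * real e + 4")
      case True
      hence "real h \<ge> real e" using hge by linarith
      hence "real m = real h - real e" using mh by simp
      hence "real m \<ge> \<alpha> / 4" using hge True by linarith
      hence "(\<alpha> / 4) * (\<alpha> / 2) \<le> real m * (\<alpha> / 2)" using a0 by (intro mult_right_mono) auto
      hence "g \<ge> (\<alpha> / 4) * (\<alpha> / 2)" using gm by linarith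
      moreover have "(\<alpha> / 4) * (\<alpha> / 2) = \<alpha>^2 / 8" by (simp add: power2_eq_square)
      moreover have "real \<tau>1 * \<alpha> \<ge> 0" using a0 by simp
      ultimately have "s \<ge> \<alpha>^2 / 8" using sg by linarith
      hence "real n ^ 2 * \<alpha>^2 \<le> real n ^ 2 * (8 * s)" by (intro mult_left_mono) auto
      also have "\<dots> = 8 * (real n ^ 2 * s)" by simp
      also have "\<dots> \<le> C * (real n ^ 2 * s)" unfolding C_def using n2s by (intro mult_right_mono) auto
      also have "\<dots> = C * real n ^ 2 * s" by (simp add: mult.assoc)
      finally show ?thesis using M2 by linarith
    next
      case False
      hence "\<alpha> * \<alpha> \<le> (4 * real e + 4) * \<alpha>" using a0 by (intro mult_right_mono) auto
      hence "\<alpha>^2 \<le> (4 * real e + 4) * \<alpha>" by (simp add: power2_eq_square)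
      also have "\<dots> \<le> (4 * real e + 4) * s" using sa by (intro mult_left_mono) auto
      finally have "\<alpha>^2 \<le> (4 * real e + 4) * s" .
      hence "real n ^ 2 * \<alpha>^2 \<le> real n ^ 2 * ((4 * real e + 4) * s)" by (intro mult_left_mono) auto
      also have "\<dots> \<le> C * real n ^ 2 * s"
      proof -
        have "e \<le> \<tau>1" unfolding e_def by simp
        hence "4 * e + 4 \<le> (\<tau>1+1)^2 + 8 + 4*(\<tau>1+1)" by simp
        hence "real (4 * e + 4) \<le> C" unfolding C_def by linarith
        hence "4 * real e + 4 \<le> C" by simp
        hence "(4 * real e + 4) * (real n ^ 2 * s) \<le> C * (real n ^ 2 * s)" using n2s by (intro mult_right_mono) auto
        thus ?thesis by (simp add: algebra_simps)
      qed
      finally show ?thesis using M2 by linarith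
    qed
  qed
  thus "M^2 \<le> real ((\<tau>1+1)^2 + 8 + 4*(\<tau>1+1)) * real n ^ 2 * (real n * \<alpha> - M)"
    unfolding C_def s_def .
qed




lemma eset_point:
  fixes \<tau>1 \<tau>2 n :: nat
  assumes t: "1 \<le> \<tau>2" "\<tau>2 \<le> \<tau>1" "\<tau>1 < n" and P: "(Er, Ed) \<in> Eset \<tau>1 \<tau>2 n"
  shows "Ed \<le> Er + 1" "Ed \<le> 2"
    "2 * Ed \<le> 2 + Er + ln (real ((\<tau>1+1)^2 + 8 + 4*(\<tau>1+1))) / ln (real n)"
proof -
  obtain \<alpha> M where E: "Er = ln (real n * \<alpha> - M) / ln (real n)" "Ed = ln M / ln (real n)"
    and ach: "achievable n (n - \<tau>1) (n - \<tau>2) \<alpha> M" and s0: "real n * \<alpha> - M > 0" and M0: "M > 0"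
    using P unfolding Eset_def by auto
  define s where "s = real n * \<alpha> - M"
  define C where "C = real ((\<tau>1+1)^2 + 8 + 4*(\<tau>1+1))"
  have ln0: "ln (real n) > 0" using t by simp
  have b1: "M \<le> real n * s" using eset_bounds(1)[OF t ach M0] unfolding s_def .
  have b2: "M \<le> real n ^ 2" using eset_bounds(2)[OF t ach M0] .
  have b3: "M^2 \<le> C * real n ^ 2 * s" using eset_bounds(3)[OF t ach M0] unfolding s_def C_def .
  have sp: "s > 0" using s0 unfolding s_def .
  have Cp: "C > 0" unfolding C_def by (simp only: of_nat_0_less_iff)
  have np: "real n > 0" using t by simp
  have "ln M \<le> ln (real n * s)" using b1 M0 np sp by simp
  also have "\<dots> = ln (real n) + ln s" using np sp by (simp add: ln_mult)
  finally have "ln M / ln (real n) \<le> (ln (real n) + ln s) / ln (real n)" using ln0 by (simp add: divide_right_mono)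
  also have "\<dots> = 1 + ln s / ln (real n)" using ln0 by (simp add: add_divide_distrib)
  finally show "Ed \<le> Er + 1" unfolding E s_def by simp
  have "ln M \<le> ln (real n ^ 2)" using b2 M0 np by simp
  also have "\<dots> = 2 * ln (real n)" by (simp add: ln_realpow)
  finally have "ln M \<le> 2 * ln (real n)" .
  thus "Ed \<le> 2" unfolding E using ln0 by (simp add: pos_divide_le_eq[OF ln0])
  have "ln (M^2) \<le> ln (C * real n ^ 2 * s)" using b3 M0 np sp Cp by simp
  hence "2 * ln M \<le> ln C + 2 * ln (real n) + ln s" using M0 np sp Cp by (simp add: ln_mult ln_realpow)
  hence "2 * ln M / ln (real n) \<le> (ln C + 2 * ln (real n) + ln s) / ln (real n)" using ln0 by (simp add: divide_right_mono)
  also have "\<dots> = 2 + ln s / ln (real n) + ln C / ln (real n)" using ln0 by (simp add: add_divide_distrib)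
  finally show "2 * Ed \<le> 2 + Er + ln (real ((\<tau>1+1)^2 + 8 + 4*(\<tau>1+1))) / ln (real n)"
    unfolding E s_def C_def by simp
qed

lemma Estar_closed: "closed Estar"
proof -
  have eq: "Estar = {p. snd p \<le> fst p + 1} \<inter> {p. 2 * snd p \<le> 2 + fst p} \<inter> {p. snd p \<le> 2}"
    unfolding Estar_def by auto
  have c1: "closed {p::real\<times>real. snd p \<le> fst p + 1}"
    using closed_Collect_le[of "\<lambda>p::real\<times>real. snd p" "\<lambda>p. fst p + 1"]
    by (simp add: continuous_on_snd continuous_on_add continuous_on_fst continuous_on_id continuous_on_const)
  have c2: "closed {p::real\<times>real. 2 * snd p \<le> 2 + fst p}"
    using closed_Collect_le[of "\<lambda>p::real\<times>real. 2 * snd p" "\<lambda>p. 2 + fst p"]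
    by (simp add: continuous_on_snd continuous_on_add continuous_on_fst continuous_on_id continuous_on_const continuous_on_mult)
  have c3: "closed {p::real\<times>real. snd p \<le> 2}"
    using closed_Collect_le[of "\<lambda>p::real\<times>real. snd p" "\<lambda>p. 2"]
    by (simp add: continuous_on_snd continuous_on_id continuous_on_const)
  show ?thesis unfolding eq by (intro closed_Int c1 c2 c3)
qed

lemma limsup_sub:
  assumes t: "1 \<le> \<tau>2" "\<tau>2 \<le> \<tau>1"
  shows "limsup_sets \<tau>1 (Eset \<tau>1 \<tau>2) \<subseteq> Estar"
proof
  fix p assume "p \<in> limsup_sets \<tau>1 (Eset \<tau>1 \<tau>2)"
  then obtain nj :: "nat \<Rightarrow> nat" and x :: "nat \<Rightarrow> real \<times> real" where
    h: "\<And>j. nj j > \<tau>1 \<and> x j \<in> Eset \<tau>1 \<tau>2 (nj j)" and lim: "filterlim nj at_top sequentially"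
    and xl: "x \<longlonglongrightarrow> p" unfolding limsup_sets_def by blast
  define C where "C = real ((\<tau>1+1)^2 + 8 + 4*(\<tau>1+1))"
  have pts: "snd (x j) \<le> fst (x j) + 1 \<and> snd (x j) \<le> 2 \<and> 2 * snd (x j) \<le> 2 + fst (x j) + ln C / ln (real (nj j))" for j
  proof -
    have "(fst (x j), snd (x j)) \<in> Eset \<tau>1 \<tau>2 (nj j)" using h[of j] by simp
    from eset_point[OF t _ this] h[of j] show ?thesis unfolding C_def by auto
  qed
  have f: "(\<lambda>j. fst (x j)) \<longlonglongrightarrow> fst p" and s: "(\<lambda>j. snd (x j)) \<longlonglongrightarrow> snd p"
    using xl by (auto intro: tendsto_fst tendsto_snd)
  have lnlim: "filterlim (\<lambda>j. ln (real (nj j))) at_top sequentially"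
    by (rule filterlim_compose[OF ln_at_top filterlim_compose[OF filterlim_real_sequentially lim]])
  have c0: "(\<lambda>j. ln C / ln (real (nj j))) \<longlonglongrightarrow> 0"
    by (rule tendsto_divide_0[OF tendsto_const filterlim_at_top_imp_at_infinity[OF lnlim]])
  have "snd p \<le> fst p + 1"
    by (rule tendsto_le[OF trivial_limit_sequentially tendsto_add[OF f tendsto_const] s]) (rule always_eventually, use pts in blast)
  moreover have "snd p \<le> 2"
    by (rule tendsto_le[OF trivial_limit_sequentially tendsto_const s]) (rule always_eventually, use pts in blast)
  moreover have "2 * snd p \<le> 2 + fst p + 0"
    by (rule tendsto_le[OF trivial_limit_sequentially tendsto_add[OF tendsto_add[OF tendsto_const f] c0] tendsto_mult[OF tendsto_const s]])
       (rule always_eventually, use pts in simp)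
  ultimately show "p \<in> Estar" unfolding Estar_def by (cases p) auto
qed

lemma closure_sub:
  assumes t: "1 \<le> \<tau>2" "\<tau>2 \<le> \<tau>1"
  shows "closure (limsup_sets \<tau>1 (Eset \<tau>1 \<tau>2)) \<subseteq> Estar"
  by (rule closure_minimal[OF limsup_sub[OF t] Estar_closed])




lemma ln_ratio_lim:
  fixes g :: "nat \<Rightarrow> real"
  assumes c: "ca > 0" "cb > 0"
    and b: "\<And>n. n \<ge> Nz \<Longrightarrow> ca * real n powr v \<le> g n \<and> g n \<le> cb * real n powr v"
  shows "(\<lambda>n. ln (g n) / ln (real n)) \<longlonglongrightarrow> v"
proof (rule real_tendsto_sandwich[where f="\<lambda>n. v + ln ca / ln (real n)" and h="\<lambda>n. v + ln cb / ln (real n)"])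
  have lnlim: "filterlim (\<lambda>n. ln (real n)) at_top sequentially"
    by (rule filterlim_compose[OF ln_at_top filterlim_real_sequentially])
  show "(\<lambda>n. v + ln ca / ln (real n)) \<longlonglongrightarrow> v"
    using tendsto_add[OF tendsto_const[of v] tendsto_divide_0[OF tendsto_const[of "ln ca"] filterlim_at_top_imp_at_infinity[OF lnlim]]] by simp
  show "(\<lambda>n. v + ln cb / ln (real n)) \<longlonglongrightarrow> v"
    using tendsto_add[OF tendsto_const[of v] tendsto_divide_0[OF tendsto_const[of "ln cb"] filterlim_at_top_imp_at_infinity[OF lnlim]]] by simp
  have key: "ln ca + v * ln (real n) \<le> ln (g n) \<and> ln (g n) \<le> ln cb + v * ln (real n)" if n: "n \<ge> max Nz 2" for n
  proof -
    have np: "real n > 0" using n by simp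
    have pp: "real n powr v > 0" using np by simp
    have bb: "ca * real n powr v \<le> g n" "g n \<le> cb * real n powr v" using b[of n] n by auto
    have gp: "g n > 0" using bb(1) c pp by (smt (verit) mult_pos_pos)
    have "ln (ca * real n powr v) \<le> ln (g n)" using bb(1) gp c pp by (subst ln_le_cancel_iff) auto
    moreover have "ln (g n) \<le> ln (cb * real n powr v)" using bb(2) gp c pp by (subst ln_le_cancel_iff) auto
    moreover have "ln (ca * real n powr v) = ln ca + v * ln (real n)" using c pp by (simp add: ln_mult)
    moreover have "ln (cb * real n powr v) = ln cb + v * ln (real n)" using c pp by (simp add: ln_mult)
    ultimately show ?thesis by simp
  qed
  show "\<forall>\<^sub>F n in sequentially. v + ln ca / ln (real n) \<le> ln (g n) / ln (real n)"
  proof (rule eventually_sequentiallyI[of "max Nz 2"])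
    fix n assume n: "n \<ge> max Nz 2"
    have l0: "ln (real n) > 0" using n by simp
    have "(ln ca + v * ln (real n)) / ln (real n) \<le> ln (g n) / ln (real n)"
      using key[OF n] l0 by (simp add: divide_right_mono)
    thus "v + ln ca / ln (real n) \<le> ln (g n) / ln (real n)" using l0 by (simp add: add_divide_distrib)
  qed
  show "\<forall>\<^sub>F n in sequentially. ln (g n) / ln (real n) \<le> v + ln cb / ln (real n)"
  proof (rule eventually_sequentiallyI[of "max Nz 2"])
    fix n assume n: "n \<ge> max Nz 2"
    have l0: "ln (real n) > 0" using n by simp
    have "ln (g n) / ln (real n) \<le> (ln cb + v * ln (real n)) / ln (real n)"
      using key[OF n] l0 by (simp add: divide_right_mono)
    thus "ln (g n) / ln (real n) \<le> v + ln cb / ln (real n)" using l0 by (simp add: add_divide_distrib)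
  qed
qed

definition rr :: "nat \<Rightarrow> real \<Rightarrow> nat \<Rightarrow> nat" where
  "rr \<tau>1 u n = min n (max (\<tau>1+1) (nat \<lceil>real n powr u\<rceil>))"

definition tt :: "real \<Rightarrow> nat \<Rightarrow> nat" where
  "tt w n = nat \<lceil>real n powr w\<rceil>"

lemma rr_bounds:
  assumes u: "0 \<le> u" "u \<le> 1" and n: "n \<ge> \<tau>1 + 2"
  shows "real n powr u \<le> real (rr \<tau>1 u n)" "real (rr \<tau>1 u n) \<le> real (\<tau>1+2) * real n powr u"
    "rr \<tau>1 u n \<ge> \<tau>1 + 1" "rr \<tau>1 u n \<le> n"
proof -
  define P where "P = real n powr u"
  have n1: "real n \<ge> 1" using n by simp
  have P1: "P \<ge> 1" unfolding P_def using n1 u by (simp add: ge_one_powr_ge_zero)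
  have Pn: "P \<le> real n" unfolding P_def using powr_mono[OF u(2) n1] n1 by simp
  have ceil: "real (nat \<lceil>P\<rceil>) = of_int \<lceil>P\<rceil>" using P1 by simp
  have c1: "P \<le> real (nat \<lceil>P\<rceil>)" using ceil by linarith
  have c2: "real (nat \<lceil>P\<rceil>) \<le> P + 1" using ceil by linarith
  have c3: "nat \<lceil>P\<rceil> \<le> n" using Pn by (simp add: nat_le_iff ceiling_le_iff)
  have m: "max (\<tau>1+1) (nat \<lceil>P\<rceil>) \<le> n" using c3 n by simp
  have r_eq: "rr \<tau>1 u n = max (\<tau>1+1) (nat \<lceil>P\<rceil>)" unfolding rr_def P_def[symmetric] using m by simp
  show "real n powr u \<le> real (rr \<tau>1 u n)" unfolding r_eq P_def[symmetric] using c1 by simp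
  show "rr \<tau>1 u n \<ge> \<tau>1 + 1" unfolding r_eq by simp
  show "rr \<tau>1 u n \<le> n" unfolding r_eq using m .
  have A: "real \<tau>1 * 1 \<le> real \<tau>1 * P" using P1 by (intro mult_left_mono) auto
  have E: "real (\<tau>1+2) * P = real \<tau>1 * P + 2 * P" by (simp add: algebra_simps)
  have t0: "real \<tau>1 \<ge> 0" by simp
  have "real (\<tau>1+1) \<le> real \<tau>1 * P + 2 * P" using A P1 t0 by simp
  hence "real (\<tau>1+1) \<le> real (\<tau>1+2) * P" unfolding E .
  moreover have "real (nat \<lceil>P\<rceil>) \<le> real \<tau>1 * P + 2 * P" using c2 P1 A t0 by linarith
  hence "real (nat \<lceil>P\<rceil>) \<le> real (\<tau>1+2) * P" unfolding E .
  ultimately show "real (rr \<tau>1 u n) \<le> real (\<tau>1+2) * real n powr u" unfolding r_eq P_def[symmetric]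
    by (simp add: of_nat_max)
qed

lemma tt_bounds:
  assumes w: "0 \<le> w" and n: "n \<ge> 1"
  shows "real n powr w \<le> real (tt w n)" "real (tt w n) \<le> 2 * real n powr w" "tt w n \<ge> 1"
proof -
  define Q where "Q = real n powr w"
  have n1: "real n \<ge> 1" using n by simp
  have Q1: "Q \<ge> 1" unfolding Q_def using n1 w by (simp add: ge_one_powr_ge_zero)
  have ceil: "real (nat \<lceil>Q\<rceil>) = of_int \<lceil>Q\<rceil>" using Q1 by simp
  show "real n powr w \<le> real (tt w n)" unfolding tt_def Q_def[symmetric] using ceil by linarith
  show "real (tt w n) \<le> 2 * real n powr w" unfolding tt_def Q_def[symmetric] using ceil Q1 by linarith
  show "tt w n \<ge> 1" unfolding tt_def Q_def[symmetric] using Q1 by linarith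
qed




lemma ln_ratio6:
  fixes p1 p2 p3 q1 q2 q3 L :: real
  assumes "p1 > 0" "p2 > 0" "p3 > 0" "q1 > 0" "q2 > 0" "q3 > 0"
  shows "ln (p1 * p2 * p3 / (q1 * q2 * q3)) / L =
         ln p1 / L + ln p2 / L + ln p3 / L - ln q1 / L - ln q2 / L - ln q3 / L"
proof -
  have "ln (p1 * p2 * p3 / (q1 * q2 * q3)) = ln p1 + ln p2 + ln p3 - (ln q1 + ln q2 + ln q3)"
    using assms by (simp add: ln_mult_pos ln_divide_pos)
  thus ?thesis by (simp add: add_divide_distrib diff_divide_distrib)
qed

lemma asym:
  fixes \<tau>1 :: nat and u w :: real
  assumes t: "\<tau>1 \<ge> 1" and u: "0 \<le> u" "u \<le> 1" and w: "0 \<le> w"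
  shows "(\<lambda>n. ln (real (rr \<tau>1 u n - \<tau>1) * real n * (real n - 1) /
            (real (rr \<tau>1 u n) * (real (rr \<tau>1 u n) - 1) * real (tt w n))) / ln (real n)) \<longlonglongrightarrow> 2 - u - w"
    and "(\<lambda>n. ln (real \<tau>1 * real n * (real n - 1) /
            (real (rr \<tau>1 u n) * (real (rr \<tau>1 u n) - 1) * real (tt w n))) / ln (real n)) \<longlonglongrightarrow> 2 - 2*u - w"
proof -
  define N0 where "N0 = \<tau>1 + 2"
  have rb: "\<And>n. n \<ge> N0 \<Longrightarrow> real n powr u \<le> real (rr \<tau>1 u n) \<and> real (rr \<tau>1 u n) \<le> real (\<tau>1+2) * real n powr u
     \<and> rr \<tau>1 u n \<ge> \<tau>1 + 1 \<and> rr \<tau>1 u n \<le> n"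
    using rr_bounds[OF u] unfolding N0_def by blast
  have tb: "\<And>n. n \<ge> N0 \<Longrightarrow> real n powr w \<le> real (tt w n) \<and> real (tt w n) \<le> 2 * real n powr w \<and> tt w n \<ge> 1"
    using tt_bounds[OF w] unfolding N0_def by (metis le_add2 le_trans one_le_numeral)
  have F1: "(\<lambda>n. ln (real (rr \<tau>1 u n)) / ln (real n)) \<longlonglongrightarrow> u"
  proof (rule ln_ratio_lim[where ca=1 and cb="real (\<tau>1+2)" and Nz=N0])
    fix n assume "n \<ge> N0" thus "1 * real n powr u \<le> real (rr \<tau>1 u n) \<and> real (rr \<tau>1 u n) \<le> real (\<tau>1+2) * real n powr u"
      using rb by simp
  qed auto
  have F2: "(\<lambda>n. ln (real (rr \<tau>1 u n) - 1) / ln (real n)) \<longlonglongrightarrow> u"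
  proof (rule ln_ratio_lim[where ca="1/2" and cb="real (\<tau>1+2)" and Nz=N0])
    fix n assume n: "n \<ge> N0"
    have "real (rr \<tau>1 u n) \<ge> 2" using rb[OF n] t by linarith
    thus "1/2 * real n powr u \<le> real (rr \<tau>1 u n) - 1 \<and> real (rr \<tau>1 u n) - 1 \<le> real (\<tau>1+2) * real n powr u"
      using rb[OF n] by linarith
  qed auto
  have F3: "(\<lambda>n. ln (real (rr \<tau>1 u n - \<tau>1)) / ln (real n)) \<longlonglongrightarrow> u"
  proof (rule ln_ratio_lim[where ca="1/real (\<tau>1+1)" and cb="real (\<tau>1+2)" and Nz=N0])
    fix n assume n: "n \<ge> N0"
    define r where "r = rr \<tau>1 u n"
    have r1: "r \<ge> \<tau>1 + 1" "real n powr u \<le> real r" "real r \<le> real (\<tau>1+2) * real n powr u"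
      using rb[OF n] unfolding r_def by auto
    have k: "real (r - \<tau>1) = real r - real \<tau>1" using r1 by simp
    have "real (\<tau>1+1) * (real r - real \<tau>1) - real r = real \<tau>1 * (real r - real (\<tau>1 + 1))"
      by (simp add: algebra_simps)
    also have "\<dots> \<ge> 0" using r1 by simp
    finally have "real (\<tau>1+1) * (real r - real \<tau>1) \<ge> real r" by simp
    hence "real r / real (\<tau>1+1) \<le> real (\<tau>1+1) * (real r - real \<tau>1) / real (\<tau>1+1)"
      by (intro divide_right_mono) auto
    also have "\<dots> = real r - real \<tau>1" by (simp del: of_nat_add)
    finally have "real r / real (\<tau>1+1) \<le> real r - real \<tau>1" .
    moreover have "real n powr u / real (\<tau>1+1) \<le> real r / real (\<tau>1+1)" using r1 by (intro divide_right_mono) auto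
    ultimately have lo: "1 / real (\<tau>1+1) * real n powr u \<le> real (r - \<tau>1)" using k by simp
    have "real (r - \<tau>1) \<le> real r" by simp
    hence "real (r - \<tau>1) \<le> real (\<tau>1+2) * real n powr u" using r1 by linarith
    thus "1 / real (\<tau>1+1) * real n powr u \<le> real (rr \<tau>1 u n - \<tau>1) \<and> real (rr \<tau>1 u n - \<tau>1) \<le> real (\<tau>1+2) * real n powr u"
      using lo unfolding r_def by simp
  qed auto
  have F4: "(\<lambda>n. ln (real (tt w n)) / ln (real n)) \<longlonglongrightarrow> w"
  proof (rule ln_ratio_lim[where ca=1 and cb=2 and Nz=N0])
    fix n assume "n \<ge> N0" thus "1 * real n powr w \<le> real (tt w n) \<and> real (tt w n) \<le> 2 * real n powr w"
      using tb by simp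
  qed auto
  have F5: "(\<lambda>n. ln (real n - 1) / ln (real n)) \<longlonglongrightarrow> 1"
  proof (rule ln_ratio_lim[where ca="1/2" and cb=1 and Nz=N0])
    fix n assume n: "n \<ge> N0"
    hence "real n \<ge> 2" unfolding N0_def by simp
    thus "1/2 * real n powr 1 \<le> real n - 1 \<and> real n - 1 \<le> 1 * real n powr 1" by simp
  qed auto
  have F6: "(\<lambda>n. ln (real n) / ln (real n)) \<longlonglongrightarrow> 1"
  proof (rule ln_ratio_lim[where ca=1 and cb=1 and Nz=N0])
    fix n assume n: "n \<ge> N0"
    thus "1 * real n powr 1 \<le> real n \<and> real n \<le> 1 * real n powr 1" by simp
  qed auto
  have F7: "(\<lambda>n. ln (real \<tau>1) / ln (real n)) \<longlonglongrightarrow> 0"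
  proof (rule ln_ratio_lim[where ca="real \<tau>1" and cb="real \<tau>1" and Nz=N0])
    fix n assume n: "n \<ge> N0"
    hence "n \<noteq> 0" unfolding N0_def by simp
    thus "real \<tau>1 * real n powr 0 \<le> real \<tau>1 \<and> real \<tau>1 \<le> real \<tau>1 * real n powr 0" by simp
  qed (use t in auto)
  have pos: "real (rr \<tau>1 u n - \<tau>1) > 0 \<and> real n > 0 \<and> real n - 1 > 0 \<and> real (rr \<tau>1 u n) > 0
     \<and> real (rr \<tau>1 u n) - 1 > 0 \<and> real (tt w n) > 0" if n: "n \<ge> N0" for n
    using rb[OF n] tb[OF n] n t unfolding N0_def by auto
  show "(\<lambda>n. ln (real (rr \<tau>1 u n - \<tau>1) * real n * (real n - 1) /
            (real (rr \<tau>1 u n) * (real (rr \<tau>1 u n) - 1) * real (tt w n))) / ln (real n)) \<longlonglongrightarrow> 2 - u - w"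
  proof (rule Lim_transform_eventually)
    show "(\<lambda>n. ln (real (rr \<tau>1 u n - \<tau>1)) / ln (real n) + ln (real n) / ln (real n) + ln (real n - 1) / ln (real n)
       - ln (real (rr \<tau>1 u n)) / ln (real n) - ln (real (rr \<tau>1 u n) - 1) / ln (real n) - ln (real (tt w n)) / ln (real n))
       \<longlonglongrightarrow> 2 - u - w"
      using tendsto_diff[OF tendsto_diff[OF tendsto_diff[OF tendsto_add[OF tendsto_add[OF F3 F6] F5] F1] F2] F4] by simp
    show "\<forall>\<^sub>F n in sequentially. ln (real (rr \<tau>1 u n - \<tau>1)) / ln (real n) + ln (real n) / ln (real n) + ln (real n - 1) / ln (real n)
       - ln (real (rr \<tau>1 u n)) / ln (real n) - ln (real (rr \<tau>1 u n) - 1) / ln (real n) - ln (real (tt w n)) / ln (real n) =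
       ln (real (rr \<tau>1 u n - \<tau>1) * real n * (real n - 1) /
            (real (rr \<tau>1 u n) * (real (rr \<tau>1 u n) - 1) * real (tt w n))) / ln (real n)"
      by (rule eventually_sequentiallyI[of N0]) (use pos in \<open>simp add: ln_ratio6\<close>)
  qed
  show "(\<lambda>n. ln (real \<tau>1 * real n * (real n - 1) /
            (real (rr \<tau>1 u n) * (real (rr \<tau>1 u n) - 1) * real (tt w n))) / ln (real n)) \<longlonglongrightarrow> 2 - 2*u - w"
  proof (rule Lim_transform_eventually)
    show "(\<lambda>n. ln (real \<tau>1) / ln (real n) + ln (real n) / ln (real n) + ln (real n - 1) / ln (real n)
       - ln (real (rr \<tau>1 u n)) / ln (real n) - ln (real (rr \<tau>1 u n) - 1) / ln (real n) - ln (real (tt w n)) / ln (real n))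
       \<longlonglongrightarrow> 2 - 2*u - w"
      using tendsto_diff[OF tendsto_diff[OF tendsto_diff[OF tendsto_add[OF tendsto_add[OF F7 F6] F5] F1] F2] F4] by simp
    show "\<forall>\<^sub>F n in sequentially. ln (real \<tau>1) / ln (real n) + ln (real n) / ln (real n) + ln (real n - 1) / ln (real n)
       - ln (real (rr \<tau>1 u n)) / ln (real n) - ln (real (rr \<tau>1 u n) - 1) / ln (real n) - ln (real (tt w n)) / ln (real n) =
       ln (real \<tau>1 * real n * (real n - 1) /
            (real (rr \<tau>1 u n) * (real (rr \<tau>1 u n) - 1) * real (tt w n))) / ln (real n)"
      by (rule eventually_sequentiallyI[of N0]) (use pos t in \<open>simp add: ln_ratio6\<close>)
  qed
qed




lemma binom_ids:
  fixes n r :: nat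
  assumes "2 \<le> r" "r \<le> n"
  shows "n * ((n-1) choose (r-1)) = (n choose r) * r"
    and "(n-1) * ((n-2) choose (r-2)) = ((n-1) choose (r-1)) * (r-1)"
proof -
  have "Suc (n-1) * ((n-1) choose (r-1)) = (Suc (n-1) choose Suc (r-1)) * Suc (r-1)"
    by (rule Suc_times_binomial_eq)
  moreover have "Suc (n-1) = n" "Suc (r-1) = r" using assms by auto
  ultimately show "n * ((n-1) choose (r-1)) = (n choose r) * r" by simp
  have "Suc (n-2) * ((n-2) choose (r-2)) = (Suc (n-2) choose Suc (r-2)) * Suc (r-2)"
    by (rule Suc_times_binomial_eq)
  moreover have "Suc (n-2) = n-1" "Suc (r-2) = r-1" using assms by auto
  ultimately show "(n-1) * ((n-2) choose (r-2)) = ((n-1) choose (r-1)) * (r-1)" by simp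
qed

lemma ln_max_ratio:
  fixes x y L :: real
  assumes "x > 0" "y > 0" "L > 0"
  shows "ln (max x y) / L = max (ln x / L) (ln y / L)"
proof (cases "x \<le> y")
  case True
  hence "ln x \<le> ln y" using assms by simp
  hence "ln x / L \<le> ln y / L" using assms by (simp add: divide_right_mono)
  thus ?thesis using True by (simp add: max_def)
next
  case False
  hence "ln y \<le> ln x" using assms by simp
  hence "ln y / L \<le> ln x / L" using assms by (simp add: divide_right_mono)
  thus ?thesis using False by (simp add: max_def)
qed

lemma Estar_sub:
  fixes \<tau>1 \<tau>2 :: nat
  assumes t: "1 \<le> \<tau>2" "\<tau>2 \<le> \<tau>1" and p: "p \<in> Estar"
  shows "p \<in> limsup_sets \<tau>1 (Eset \<tau>1 \<tau>2)"
proof -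
  obtain a b where pab: "p = (a, b)" by (cases p)
  have ab: "b \<le> a + 1" "2 * b \<le> 2 + a" "b \<le> 2" using p unfolding pab Estar_def by auto
  define u where "u = min 1 (2 - b)"
  define w where "w = 2 - b - u"
  have u: "0 \<le> u" "u \<le> 1" and w: "0 \<le> w" using ab unfolding u_def w_def by auto
  have bu: "2 - u - w = b" unfolding w_def by simp
  have c0a: "2 - 2*u - w \<le> a" unfolding w_def u_def using ab by (auto simp: min_def)
  have t1: "\<tau>1 \<ge> 1" using t by simp
  define r where "r n = rr \<tau>1 u n" for n
  define tn where "tn n = tt w n" for n
  define Mv where "Mv n = real (r n - \<tau>1) * real n * (real n - 1) / (real (r n) * (real (r n) - 1) * real (tn n))" for n
  define Xv where "Xv n = real \<tau>1 * real n * (real n - 1) / (real (r n) * (real (r n) - 1) * real (tn n))" for n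
  have LM: "(\<lambda>n. ln (Mv n) / ln (real n)) \<longlonglongrightarrow> b"
    using asym(1)[OF t1 u w] unfolding Mv_def r_def tn_def bu .
  have LX: "(\<lambda>n. ln (Xv n) / ln (real n)) \<longlonglongrightarrow> 2 - 2*u - w"
    using asym(2)[OF t1 u w] unfolding Xv_def r_def tn_def .
  define N0 where "N0 = \<tau>1 + 2"
  have rb: "\<And>n. n \<ge> N0 \<Longrightarrow> r n \<ge> \<tau>1 + 1 \<and> r n \<le> n"
    using rr_bounds[OF u] unfolding N0_def r_def by blast
  have tb: "\<And>n. n \<ge> N0 \<Longrightarrow> tn n \<ge> 1"
    using tt_bounds[OF w] unfolding N0_def tn_def by (metis le_add2 le_trans one_le_numeral)
  have Xpos: "Xv n > 0" if n: "n \<ge> N0" for n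
    using rb[OF n] tb[OF n] n t unfolding Xv_def N0_def by (auto intro!: divide_pos_pos mult_pos_pos)
  have Mpos: "Mv n > 0" if n: "n \<ge> N0" for n
    using rb[OF n] tb[OF n] n t unfolding Mv_def N0_def by (auto intro!: divide_pos_pos mult_pos_pos)
  define Pt where "Pt n = (ln (max (Xv n) (real n powr a)) / ln (real n), ln (Mv n) / ln (real n))" for n
  have inE: "Pt n \<in> Eset \<tau>1 \<tau>2 n" if n: "n \<ge> N0" for n
  proof -
    define rn where "rn = r n"
    define A where "A = (n-1) choose (rn-1)"
    define Bb where "Bb = (n-2) choose (rn-2)"
    define L where "L = n choose rn"
    define T where "T = tn n"
    have r1: "rn \<ge> \<tau>1 + 1" "rn \<le> n" using rb[OF n] unfolding rn_def by auto
    have r2: "2 \<le> rn" using r1 t by simp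
    have T1: "T \<ge> 1" using tb[OF n] unfolding T_def .
    have Bb0: "real Bb > 0" unfolding Bb_def using r1 r2 by (simp add: zero_less_binomial)
    have I1: "real n * real A = real L * real rn" using binom_ids(1)[OF r2 r1(2)] unfolding A_def L_def
      by (metis of_nat_mult)
    have I2: "(real n - 1) * real Bb = real A * (real rn - 1)"
    proof -
      have "real ((n-1) * Bb) = real (A * (rn-1))" using binom_ids(2)[OF r2 r1(2)] unfolding A_def Bb_def by simp
      thus ?thesis using r2 r1 by (simp add: of_nat_diff)
    qed
    have H: "real L * (real rn * (real rn - 1)) = real n * (real n - 1) * real Bb"
    proof -
      have "real L * (real rn * (real rn - 1)) = (real L * real rn) * (real rn - 1)" by (simp add: algebra_simps)
      also have "\<dots> = real n * real A * (real rn - 1)" using I1 by simp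
      also have "\<dots> = real n * (real A * (real rn - 1))" by (simp only: mult.assoc)
      also have "\<dots> = real n * ((real n - 1) * real Bb)" by (simp only: I2)
      finally show ?thesis by (simp add: algebra_simps)
    qed
    have rpos: "real rn > 0" "real rn - 1 > 0" using r2 by auto
    have Leq: "real L = real n * (real n - 1) * real Bb / (real rn * (real rn - 1))"
      using H rpos by (simp add: field_simps)
    define \<alpha>0 where "\<alpha>0 = real A / (real Bb * real T)"
    define M0 where "M0 = real L * real (rn - \<tau>1) / (real Bb * real T)"
    have ach0: "achievable n (n-\<tau>1) (n-\<tau>2) \<alpha>0 M0"
      using layered_achievable[OF t _ r1(2) T1] r1 unfolding \<alpha>0_def M0_def A_def Bb_def L_def by simp
    have M0eq: "M0 = Mv n"
      unfolding M0_def Mv_def rn_def[symmetric] T_def[symmetric] Leq using Bb0 rpos T1 by (simp add: field_simps)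
    have k: "real (rn - \<tau>1) = real rn - real \<tau>1" using r1 by simp
    have X0eq: "real n * \<alpha>0 - M0 = Xv n"
    proof -
      have "real n * \<alpha>0 = real L * real rn / (real Bb * real T)" unfolding \<alpha>0_def using I1 by simp
      hence "real n * \<alpha>0 - M0 = real L * real \<tau>1 / (real Bb * real T)"
        unfolding M0_def k by (simp add: diff_divide_distrib[symmetric] algebra_simps)
      also have "\<dots> = Xv n" unfolding Xv_def rn_def[symmetric] T_def[symmetric] Leq using Bb0 rpos T1 by (simp add: field_simps)
      finally show ?thesis .
    qed
    define \<alpha>1 where "\<alpha>1 = max \<alpha>0 ((real n powr a + M0) / real n)"
    have ach1: "achievable n (n-\<tau>1) (n-\<tau>2) \<alpha>1 M0"
      by (rule achievable_mono[OF ach0]) (auto simp: \<alpha>1_def)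
    have np: "real n > 0" using n unfolding N0_def by simp
    have s1: "real n * \<alpha>1 - M0 = max (Xv n) (real n powr a)"
    proof -
      have "real n * \<alpha>1 = max (real n * \<alpha>0) (real n powr a + M0)"
        unfolding \<alpha>1_def using np by (simp add: max_mult_distrib_left)
      thus ?thesis using X0eq by (simp add: max_diff_distrib_left)
    qed
    have "Pt n = (ln (real n * \<alpha>1 - M0) / ln (real n), ln M0 / ln (real n))"
      unfolding Pt_def s1 by (simp add: M0eq)
    moreover have "real n * \<alpha>1 - M0 > 0" unfolding s1 using np by (simp add: less_max_iff_disj)
    moreover have "M0 > 0" using Mpos[OF n] M0eq by simp
    ultimately show ?thesis unfolding Eset_def using ach1 by blast
  qed
  have L1: "(\<lambda>n. ln (max (Xv n) (real n powr a)) / ln (real n)) \<longlonglongrightarrow> a"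
  proof (rule Lim_transform_eventually)
    show "(\<lambda>n. max (ln (Xv n) / ln (real n)) a) \<longlonglongrightarrow> a"
      using tendsto_max[OF LX tendsto_const[of a]] c0a by (simp add: max_absorb2)
    show "\<forall>\<^sub>F n in sequentially. max (ln (Xv n) / ln (real n)) a = ln (max (Xv n) (real n powr a)) / ln (real n)"
    proof (rule eventually_sequentiallyI[of N0])
      fix n assume n: "n \<ge> N0"
      have np: "real n > 1" using n unfolding N0_def by simp
      hence l0: "ln (real n) > 0" by simp
      have "ln (max (Xv n) (real n powr a)) / ln (real n) = max (ln (Xv n) / ln (real n)) (ln (real n powr a) / ln (real n))"
        using Xpos[OF n] np l0 by (intro ln_max_ratio) auto
      also have "ln (real n powr a) / ln (real n) = a" using l0 by simp
      finally show "max (ln (Xv n) / ln (real n)) a = ln (max (Xv n) (real n powr a)) / ln (real n)" by simp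
    qed
  qed
  have conv: "Pt \<longlonglongrightarrow> (a, b)" unfolding Pt_def by (intro tendsto_Pair L1 LM)
  show ?thesis unfolding limsup_sets_def pab
  proof (intro CollectI exI conjI allI)
    fix j
    show "(\<lambda>j. j + N0) j > \<tau>1" unfolding N0_def by simp
    show "(\<lambda>j. Pt (j + N0)) j \<in> Eset \<tau>1 \<tau>2 ((\<lambda>j. j + N0) j)" using inE by simp
  next
    show "filterlim (\<lambda>j. j + N0) at_top sequentially" by (rule filterlim_add_const_nat_at_top)
    show "(\<lambda>j. Pt (j + N0)) \<longlonglongrightarrow> (a, b)" by (rule LIMSEQ_ignore_initial_segment[OF conv])
  qed
qed



theorem mainTheorem1:
  fixes \<tau>1 \<tau>2 :: nat
  assumes "\<tau>1 \<ge> \<tau>2" and "\<tau>2 \<ge> 1"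
  shows "Estar = closure (limsup_sets \<tau>1 (Eset \<tau>1 \<tau>2))"
proof
  show "Estar \<subseteq> closure (limsup_sets \<tau>1 (Eset \<tau>1 \<tau>2))"
    using Estar_sub[OF assms(2) assms(1)] closure_subset by blast
  show "closure (limsup_sets \<tau>1 (Eset \<tau>1 \<tau>2)) \<subseteq> Estar"
    by (rule closure_sub[OF assms(2) assms(1)])
qed

end
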